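(* For every $h\in\mathbb Z$, the set of $\theta\in M\cap C^\infty([0,2\pi])$ such that $s\mapsto\theta(s)-hs$ extends to a smooth $2\pi$-periodic function on $\mathbb R$ (i.e. the direction functions of smooth closed curves with rotation index $h$) is dense in $M\setminus Z$ with respect to the $L^2$ norm.
   Context: $L^2=L^2([0,2\pi];\mathbb R)$. $\phi_1(\theta)=\int_0^{2\pi}\theta$, $\phi_2(\theta)=\int_0^{2\pi}\cos\theta$, $\phi_3(\theta)=\int_0^{2\pi}\sin\theta$, $M=\{\theta\in L^2:(\phi_1,\phi_2,\phi_3)(\theta)=(2\pi^2,0,0)\}$. A $\theta\in M$ represents the closed curve $\xi(s)=\int_0^s(\cos\theta(t),\sin\theta(t))\,dt$. $Z$ is the set of $\theta\in M$ with $\theta(s)-\alpha\in\pi\mathbb Z$ a.e. for some constant $\alpha$. *)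

theory Defs
  imports "HOL-Analysis.Analysis"
begin

definition L2_02pi :: "(real \<Rightarrow> real) set" where
  "L2_02pi = {\<theta>. set_borel_measurable lborel {0..2*pi} \<theta> \<and>
                  set_integrable lborel {0..2*pi} (\<lambda>s. (\<theta> s)\<^sup>2)}"

definition L2_dist :: "(real \<Rightarrow> real) \<Rightarrow> (real \<Rightarrow> real) \<Rightarrow> real" where
  "L2_dist \<theta> \<eta> = sqrt (LINT s:{0..2*pi}|lborel. (\<theta> s - \<eta> s)\<^sup>2)"

definition M_set :: "(real \<Rightarrow> real) set" where
  "M_set = {\<theta> \<in> L2_02pi.
      (LINT s:{0..2*pi}|lborel. \<theta> s) = 2 * pi\<^sup>2 \<and>
      (LINT s:{0..2*pi}|lborel. cos (\<theta> s)) = 0 \<and>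
      (LINT s:{0..2*pi}|lborel. sin (\<theta> s)) = 0}"

definition Z_set :: "(real \<Rightarrow> real) set" where
  "Z_set = {\<theta> \<in> M_set. \<exists>\<alpha>::real.
      AE s in lborel. s \<in> {0..2*pi} \<longrightarrow> (\<exists>k::int. \<theta> s - \<alpha> = of_int k * pi)}"

text \<open>C-infinity functions on the whole real line: there is a sequence of
  functions, starting with g, each the derivative of the previous one.\<close>
definition smooth_real :: "(real \<Rightarrow> real) \<Rightarrow> bool" where
  "smooth_real g \<longleftrightarrow> (\<exists>D :: nat \<Rightarrow> real \<Rightarrow> real. D 0 = g \<and>
      (\<forall>n x. (D n has_real_derivative D (Suc n) x) (at x)))"

definition smooth_index_set :: "int \<Rightarrow> (real \<Rightarrow> real) set" where
  "smooth_index_set h = {\<theta> \<in> M_set. \<exists>g. smooth_real g \<and> (\<forall>x. g (x + 2*pi) = g x) \<and>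
      (\<forall>s\<in>{0..2*pi}. \<theta> s - of_int h * s = g s)}"

end

theory Submission
  imports Defs
begin


inductive_set SM :: "(real \<Rightarrow> real) set" where
  SM_const: "(\<lambda>x. c) \<in> SM"
| SM_cos: "cos \<in> SM"
| SM_sin: "sin \<in> SM"
| SM_add: "f \<in> SM \<Longrightarrow> g \<in> SM \<Longrightarrow> (\<lambda>x. f x + g x) \<in> SM"
| SM_mult: "f \<in> SM \<Longrightarrow> g \<in> SM \<Longrightarrow> (\<lambda>x. f x * g x) \<in> SM"

lemma SM_scale: "f \<in> SM \<Longrightarrow> (\<lambda>x. a * f x) \<in> SM"
  using SM_mult[OF SM_const] by blast

lemma SM_diff: "f \<in> SM \<Longrightarrow> g \<in> SM \<Longrightarrow> (\<lambda>x. f x - g x) \<in> SM"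
proof -
  assume "f \<in> SM" "g \<in> SM"
  then have "(\<lambda>x. f x + (-1) * g x) \<in> SM" by (intro SM_add SM_scale)
  then show ?thesis by simp
qed

lemma SM_deriv: "f \<in> SM \<Longrightarrow> \<exists>f'\<in>SM. \<forall>x. (f has_real_derivative f' x) (at x)"
proof (induction rule: SM.induct)
  case (SM_const c)
  show ?case by (intro bexI[of _ "\<lambda>x. 0"]) (auto intro: SM.intros)
next
  case SM_cos
  have "(\<lambda>x. (-1) * sin x) \<in> SM" by (intro SM_scale SM.intros)
  then show ?case by (intro bexI[of _ "\<lambda>x. (-1) * sin x"]) (auto intro!: derivative_eq_intros)
next
  case SM_sin
  show ?case by (intro bexI[of _ cos]) (auto intro!: derivative_eq_intros SM.intros)
next
  case (SM_add f g)
  then obtain f' g' where "f' \<in> SM" "g' \<in> SM" "\<forall>x. (f has_real_derivative f' x) (at x)"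
    "\<forall>x. (g has_real_derivative g' x) (at x)" by blast
  then show ?case by (intro bexI[of _ "\<lambda>x. f' x + g' x"]) (auto intro!: derivative_eq_intros SM.intros)
next
  case (SM_mult f g)
  then obtain f' g' where "f' \<in> SM" "g' \<in> SM" "\<forall>x. (f has_real_derivative f' x) (at x)"
    "\<forall>x. (g has_real_derivative g' x) (at x)" by blast
  moreover have "(\<lambda>x. f' x * g x + f x * g' x) \<in> SM"
    using calculation SM_mult.hyps by (intro SM.intros)
  ultimately show ?case
    by (intro bexI[of _ "\<lambda>x. f' x * g x + f x * g' x"]) (auto intro!: derivative_eq_intros)
qed

definition SMd :: "(real \<Rightarrow> real) \<Rightarrow> (real \<Rightarrow> real)" where
  "SMd f = (SOME f'. f' \<in> SM \<and> (\<forall>x. (f has_real_derivative f' x) (at x)))"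

lemma SMd: "f \<in> SM \<Longrightarrow> SMd f \<in> SM \<and> (\<forall>x. (f has_real_derivative SMd f x) (at x))"
proof -
  assume "f \<in> SM"
  then have "\<exists>f'. f' \<in> SM \<and> (\<forall>x. (f has_real_derivative f' x) (at x))" using SM_deriv by blast
  then show ?thesis unfolding SMd_def by (rule someI_ex)
qed

lemma SM_smooth: "f \<in> SM \<Longrightarrow> smooth_real f"
proof -
  assume f: "f \<in> SM"
  define D where "D n = (SMd ^^ n) f" for n
  have "D n \<in> SM" for n by (induction n) (auto simp: D_def f SMd)
  then have "\<forall>n x. (D n has_real_derivative D (Suc n) x) (at x)"
    using SMd by (auto simp: D_def)
  moreover have "D 0 = f" by (simp add: D_def)
  ultimately show ?thesis unfolding smooth_real_def by blast
qed

lemma SM_periodic: "f \<in> SM \<Longrightarrow> f (x + 2*pi) = f x"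
  by (induction rule: SM.induct) auto

lemma SM_cont: "f \<in> SM \<Longrightarrow> continuous_on UNIV f"
  by (induction rule: SM.induct) (auto intro!: continuous_intros)

lemma SM_borel: "f \<in> SM \<Longrightarrow> f \<in> borel_measurable borel"
  using SM_cont borel_measurable_continuous_onI by blast

lemma SM_sum: "finite I \<Longrightarrow> (\<And>i. i \<in> I \<Longrightarrow> f i \<in> SM) \<Longrightarrow> (\<lambda>x. \<Sum>i\<in>I. f i x) \<in> SM"
  by (induction rule: finite_induct) (auto intro: SM.intros)



lemma cis_Arg2pi_eq:
  assumes "s \<in> {0..2*pi}"
  shows "Arg2pi (cis s) = (if s = 2*pi then 0 else s)"
proof (cases "s = 2*pi")
  case True
  have "Arg2pi (exp 0) = 0" by (subst Arg2pi_exp) auto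
  then show ?thesis using True by simp
next
  case False
  then have "s < 2*pi" using assms by auto
  then have "Arg2pi (exp (\<i> * complex_of_real s)) = s"
    using assms by (subst Arg2pi_exp) auto
  then show ?thesis using False by (simp add: cis_conv_exp)
qed

lemma circle_lift:
  fixes c :: "real \<Rightarrow> real"
  assumes c: "continuous_on {0..2*pi} c" and c0: "c 0 = c (2*pi)"
  shows "continuous_on (sphere (0::complex) 1) (\<lambda>z. c (Arg2pi z))"
proof -
  let ?X = "top_of_set {0..2*pi}" and ?Y = "top_of_set (sphere (0::complex) 1)"
  have cm: "continuous_map ?X ?Y cis"
    by (auto simp: continuous_map_in_subtopology intro!: continuous_intros)
  have "compact_space ?X"
    by (simp add: compact_space_subtopology compactin_euclidean_iff)
  moreover have "Hausdorff_space ?Y"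
    by (simp add: Hausdorff_space_subtopology)
  ultimately have clm: "closed_map ?X ?Y cis"
    using cm continuous_imp_closed_map by blast
  have surj: "cis ` topspace ?X = topspace ?Y"
  proof
    show "cis ` topspace ?X \<subseteq> topspace ?Y" by auto
    show "topspace ?Y \<subseteq> cis ` topspace ?X"
    proof
      fix z :: complex assume "z \<in> topspace ?Y"
      then have nz: "norm z = 1" by simp
      have "z = cis (Arg2pi z)"
        using Arg2pi_eq[of z] nz by (simp add: cis_conv_exp)
      moreover have "Arg2pi z \<in> {0..2*pi}"
        using Arg2pi_ge_0[of z] Arg2pi_lt_2pi[of z] by auto
      ultimately show "z \<in> cis ` topspace ?X" by auto
    qed
  qed
  have q: "quotient_map ?X ?Y cis"
    by (rule continuous_closed_imp_quotient_map[OF cm clm surj])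
  have "continuous_map ?X euclideanreal c"
    using c by simp
  then have "continuous_map ?X euclideanreal ((\<lambda>z. c (Arg2pi z)) \<circ> cis)"
    by (rule continuous_map_eq) (auto simp: cis_Arg2pi_eq c0)
  then have "continuous_map ?Y euclideanreal (\<lambda>z. c (Arg2pi z))"
    by (rule continuous_compose_quotient_map[OF q])
  then show ?thesis by simp
qed

lemma rpf_SM:
  fixes q :: "complex \<Rightarrow> real"
  shows "real_polynomial_function q \<Longrightarrow> (\<lambda>s. q (cis s)) \<in> SM"
proof (induction rule: real_polynomial_function.induct)
  case (linear f)
  interpret bounded_linear f by fact
  have eq: "f (cis s) = cos s * f 1 + sin s * f \<i>" for s
  proof -
    have "cis s = cos s *\<^sub>R 1 + sin s *\<^sub>R \<i>"
      by (simp add: complex_eq_iff)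
    then have "f (cis s) = f (cos s *\<^sub>R 1 + sin s *\<^sub>R \<i>)" by simp
    also have "\<dots> = cos s * f 1 + sin s * f \<i>"
      by (simp only: add scale real_scaleR_def)
    finally show ?thesis .
  qed
  then have "(\<lambda>s. f (cis s)) = (\<lambda>s. cos s * f 1 + sin s * f \<i>)" by (intro ext)
  moreover have "(\<lambda>s. cos s * f 1 + sin s * f \<i>) \<in> SM"
    by (rule SM_add; rule SM_mult; rule SM.intros)
  ultimately show ?case by (simp only:)
next
  case (const c) show ?case by (rule SM_const)
next
  case (add f g) then show ?case using SM_add[of "\<lambda>s. f (cis s)" "\<lambda>s. g (cis s)"] by simp
next
  case (mult f g) then show ?case using SM_mult[of "\<lambda>s. f (cis s)" "\<lambda>s. g (cis s)"] by simp
qed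

lemma trig_approx:
  fixes c :: "real \<Rightarrow> real"
  assumes c: "continuous_on {0..2*pi} c" and c0: "c 0 = c (2*pi)" and e: "e > 0"
  shows "\<exists>g\<in>SM. \<forall>s\<in>{0..2*pi}. \<bar>c s - g s\<bar> < e"
proof -
  obtain P :: "complex \<Rightarrow> real" where P: "polynomial_function P"
    "\<forall>z\<in>sphere 0 1. norm ((\<lambda>z. c (Arg2pi z)) z - P z) < e"
    using Stone_Weierstrass_polynomial_function[OF compact_sphere circle_lift[OF c c0] e] by blast
  have "(\<lambda>s. P (cis s)) \<in> SM"
    using P(1) by (intro rpf_SM) (simp add: real_polynomial_function_eq)
  moreover have "\<bar>c s - P (cis s)\<bar> < e" if "s \<in> {0..2*pi}" for s
  proof -
    have "norm (c (Arg2pi (cis s)) - P (cis s)) < e" using P(2) by auto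
    moreover have "c (Arg2pi (cis s)) = c s" using that by (simp add: cis_Arg2pi_eq c0)
    ultimately show ?thesis by (simp only: real_norm_def)
  qed
  ultimately show ?thesis by (intro bexI[of _ "\<lambda>s. P (cis s)"]) auto
qed



abbreviation NN :: "real measure" where "NN \<equiv> restrict_space lborel {0..2*pi}"

lemma NN_sets_ok: "{0..2*pi} \<inter> space lborel \<in> sets lborel" by simp

lemma space_NN[simp]: "space NN = {0..2*pi}" by (simp add: space_restrict_space)

lemma emeasure_NN_space: "emeasure NN {0..2*pi} = ennreal (2*pi)"
  by (subst emeasure_restrict_space) auto

lemma measure_NN_space: "measure NN {0..2*pi} = 2*pi"
  by (subst measure_restrict_space) auto

interpretation NN: finite_measure NN
  by (rule finite_measureI) (simp add: emeasure_NN_space)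

lemma borel_NN: "f \<in> borel_measurable borel \<Longrightarrow> f \<in> borel_measurable NN"
  by (rule measurable_restrict_space1) simp

lemma cont_NN: "continuous_on {0..2*pi} f \<Longrightarrow> (f::real\<Rightarrow>real) \<in> borel_measurable NN"
proof -
  assume "continuous_on {0..2*pi} f"
  then have "f \<in> borel_measurable (restrict_space borel {0..2*pi})"
    by (rule borel_measurable_continuous_on_restrict)
  then show ?thesis
    by (subst measurable_cong_sets[OF sets_restrict_space_cong[OF sets_lborel] refl])
qed

definition L2N :: "(real \<Rightarrow> real) \<Rightarrow> bool" where
  "L2N u \<longleftrightarrow> u \<in> borel_measurable NN \<and> integrable NN (\<lambda>x. (u x)\<^sup>2)"

definition d2 :: "(real \<Rightarrow> real) \<Rightarrow> (real \<Rightarrow> real) \<Rightarrow> real" where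
  "d2 u v = integral\<^sup>L NN (\<lambda>x. (u x - v x)\<^sup>2)"

definition APX :: "(real \<Rightarrow> real) \<Rightarrow> bool" where
  "APX u \<longleftrightarrow> (\<forall>e>0. \<exists>g\<in>SM. d2 u g < e)"

lemma L2N_bounded:
  assumes "u \<in> borel_measurable NN" "\<And>x. x \<in> {0..2*pi} \<Longrightarrow> \<bar>u x\<bar> \<le> B"
  shows "L2N u"
  unfolding L2N_def
proof
  show "integrable NN (\<lambda>x. (u x)\<^sup>2)"
  proof (rule NN.integrable_const_bound[where B="B\<^sup>2"])
    show "AE x in NN. norm ((u x)\<^sup>2) \<le> B\<^sup>2"
      using assms(2) by (intro AE_I2) (auto, metis abs_ge_zero power2_abs power_mono)
  qed (use assms(1) in measurable)
qed fact

lemma cont_bounded: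
  fixes f :: "real \<Rightarrow> real"
  assumes "continuous_on {0..2*pi} f"
  obtains B where "B > 0" "\<And>x. x \<in> {0..2*pi} \<Longrightarrow> \<bar>f x\<bar> \<le> B"
proof -
  have "bounded (f ` {0..2*pi})"
    using assms by (intro compact_imp_bounded compact_continuous_image) auto
  then obtain B where "B > 0" "\<And>y. y \<in> f ` {0..2*pi} \<Longrightarrow> norm y \<le> B"
    using bounded_pos by metis
  then show ?thesis using that by auto
qed

lemma SM_L2N: "g \<in> SM \<Longrightarrow> L2N g"
proof -
  assume g: "g \<in> SM"
  then have c: "continuous_on {0..2*pi} g" using SM_cont continuous_on_subset by blast
  obtain B where "\<And>x. x \<in> {0..2*pi} \<Longrightarrow> \<bar>g x\<bar> \<le> B" using cont_bounded[OF c] by blast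
  then show ?thesis using cont_NN[OF c] by (intro L2N_bounded) auto
qed

lemma L2N_add:
  assumes "L2N u" "L2N v"
  shows "L2N (\<lambda>x. u x + v x)"
  unfolding L2N_def
proof
  show "(\<lambda>x. u x + v x) \<in> borel_measurable NN" using assms unfolding L2N_def by (intro borel_measurable_add) auto
  show "integrable NN (\<lambda>x. (u x + v x)\<^sup>2)"
  proof (rule Bochner_Integration.integrable_bound)
    show "integrable NN (\<lambda>x. 2 * (u x)\<^sup>2 + 2 * (v x)\<^sup>2)"
      using assms unfolding L2N_def by auto
    show "AE x in NN. norm ((u x + v x)\<^sup>2) \<le> norm (2 * (u x)\<^sup>2 + 2 * (v x)\<^sup>2)"
    proof (intro AE_I2)
      fix x
      have "(u x + v x)\<^sup>2 \<le> 2 * (u x)\<^sup>2 + 2 * (v x)\<^sup>2"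
        using sum_squares_ge_zero[of "u x - v x" 0] by (simp add: power2_eq_square algebra_simps)
      then show "norm ((u x + v x)\<^sup>2) \<le> norm (2 * (u x)\<^sup>2 + 2 * (v x)\<^sup>2)" by simp
    qed
  qed (use assms in \<open>unfold L2N_def, intro borel_measurable_power borel_measurable_add, auto\<close>)
qed

lemma L2N_scale:
  assumes "L2N u"
  shows "L2N (\<lambda>x. a * u x)"
  using assms unfolding L2N_def by (auto simp: power_mult_distrib)

lemma L2N_diff:
  assumes "L2N u" "L2N v"
  shows "L2N (\<lambda>x. u x - v x)"
  using L2N_add[OF assms(1) L2N_scale[OF assms(2), of "-1"]] by simp

lemma L2N_int_sq: "L2N u \<Longrightarrow> integrable NN (\<lambda>x. (u x)\<^sup>2)"
  unfolding L2N_def by simp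

lemma L2N_int_diff: "L2N u \<Longrightarrow> L2N v \<Longrightarrow> integrable NN (\<lambda>x. (u x - v x)\<^sup>2)"
  using L2N_diff L2N_int_sq by blast

lemma d2_nonneg: "d2 u v \<ge> 0"
  unfolding d2_def by (rule integral_nonneg_AE) auto

lemma sq_tri: "((a::real) - c)\<^sup>2 \<le> 2 * (a - b)\<^sup>2 + 2 * (b - c)\<^sup>2"
  using sum_squares_ge_zero[of "a - 2*b + c" 0] by (simp add: power2_eq_square algebra_simps)

lemma d2_tri:
  assumes "L2N u" "L2N v" "L2N w"
  shows "d2 u w \<le> 2 * d2 u v + 2 * d2 v w"
proof -
  have "d2 u w \<le> integral\<^sup>L NN (\<lambda>x. 2 * (u x - v x)\<^sup>2 + 2 * (v x - w x)\<^sup>2)"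
    unfolding d2_def
    using assms by (intro integral_mono L2N_int_diff) (auto intro!: sq_tri L2N_int_diff)
  also have "\<dots> = 2 * d2 u v + 2 * d2 v w"
    unfolding d2_def using assms by (simp add: L2N_int_diff)
  finally show ?thesis .
qed

lemma APX_limit:
  assumes u: "L2N u" and H: "\<And>e. e > 0 \<Longrightarrow> \<exists>v. L2N v \<and> APX v \<and> d2 u v < e"
  shows "APX u"
  unfolding APX_def
proof (intro allI impI)
  fix e :: real assume e: "e > 0"
  obtain v where v: "L2N v" "APX v" "d2 u v < e/4" using H[of "e/4"] e by auto
  obtain g where g: "g \<in> SM" "d2 v g < e/4" using v(2) e unfolding APX_def by (meson divide_pos_pos zero_less_numeral)
  have "d2 u g \<le> 2 * d2 u v + 2 * d2 v g" using d2_tri[OF u v(1) SM_L2N[OF g(1)]] .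
  also have "\<dots> < e" using v(3) g(2) by linarith
  finally show "\<exists>g\<in>SM. d2 u g < e" using g(1) by blast
qed



lemma sq_add: "((a::real) + b)\<^sup>2 \<le> 2 * a\<^sup>2 + 2 * b\<^sup>2"
  using sum_squares_ge_zero[of "a - b" 0] by (simp add: power2_eq_square algebra_simps)

lemma APX_add:
  assumes u: "L2N u" "APX u" and v: "L2N v" "APX v"
  shows "APX (\<lambda>x. u x + v x)"
  unfolding APX_def
proof (intro allI impI)
  fix e :: real assume e: "e > 0"
  obtain g1 where g1: "g1 \<in> SM" "d2 u g1 < e/4" using u(2) e unfolding APX_def by (meson divide_pos_pos zero_less_numeral)
  obtain g2 where g2: "g2 \<in> SM" "d2 v g2 < e/4" using v(2) e unfolding APX_def by (meson divide_pos_pos zero_less_numeral)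
  have L: "L2N g1" "L2N g2" using g1 g2 SM_L2N by auto
  have "d2 (\<lambda>x. u x + v x) (\<lambda>x. g1 x + g2 x) \<le> integral\<^sup>L NN (\<lambda>x. 2 * (u x - g1 x)\<^sup>2 + 2 * (v x - g2 x)\<^sup>2)"
    unfolding d2_def
  proof (rule integral_mono)
    show "integrable NN (\<lambda>x. (u x + v x - (g1 x + g2 x))\<^sup>2)"
      using L2N_int_diff[OF L2N_add[OF u(1) v(1)] L2N_add[OF L]] .
    show "integrable NN (\<lambda>x. 2 * (u x - g1 x)\<^sup>2 + 2 * (v x - g2 x)\<^sup>2)"
      using L2N_int_diff[OF u(1) L(1)] L2N_int_diff[OF v(1) L(2)] by auto
    fix x show "(u x + v x - (g1 x + g2 x))\<^sup>2 \<le> 2 * (u x - g1 x)\<^sup>2 + 2 * (v x - g2 x)\<^sup>2"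
      using sq_add[of "u x - g1 x" "v x - g2 x"] by (simp add: algebra_simps)
  qed
  also have "\<dots> = 2 * d2 u g1 + 2 * d2 v g2"
    unfolding d2_def using L2N_int_diff[OF u(1) L(1)] L2N_int_diff[OF v(1) L(2)] by simp
  also have "\<dots> < e" using g1 g2 by linarith
  finally show "\<exists>g\<in>SM. d2 (\<lambda>x. u x + v x) g < e"
    using SM_add[OF g1(1) g2(1)] by blast
qed

lemma APX_scale:
  assumes u: "APX u"
  shows "APX (\<lambda>x. a * u x)"
  unfolding APX_def
proof (intro allI impI)
  fix e :: real assume e: "e > 0"
  have pos: "a\<^sup>2 + 1 > 0" by (simp add: add_nonneg_pos)
  obtain g where g: "g \<in> SM" "d2 u g < e / (a\<^sup>2 + 1)" using u e pos unfolding APX_def by (meson divide_pos_pos)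
  have "d2 (\<lambda>x. a * u x) (\<lambda>x. a * g x) = a\<^sup>2 * d2 u g"
    unfolding d2_def by (simp add: power_mult_distrib right_diff_distrib[symmetric])
  also have "\<dots> \<le> (a\<^sup>2 + 1) * d2 u g" using d2_nonneg[of u g] by (simp add: algebra_simps)
  also have "\<dots> < e" using g(2) pos by (simp add: pos_less_divide_eq mult.commute)
  finally show "\<exists>g\<in>SM. d2 (\<lambda>x. a * u x) g < e" using SM_scale[OF g(1)] by blast
qed

lemma APX_cont:
  fixes c :: "real \<Rightarrow> real"
  assumes c: "continuous_on {0..2*pi} c" and c0: "c 0 = c (2*pi)"
  shows "APX c"
  unfolding APX_def
proof (intro allI impI)
  fix e :: real assume e: "e > 0"
  define \<delta> where "\<delta> = min 1 (e / (4*pi))"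
  have d: "\<delta> > 0" "\<delta> \<le> 1" "\<delta> \<le> e / (4*pi)" using e by (auto simp: \<delta>_def)
  obtain g where g: "g \<in> SM" "\<And>s. s \<in> {0..2*pi} \<Longrightarrow> \<bar>c s - g s\<bar> < \<delta>"
    using trig_approx[OF c c0 d(1)] by blast
  obtain B where "\<And>x. x \<in> {0..2*pi} \<Longrightarrow> \<bar>c x\<bar> \<le> B" using cont_bounded[OF c] by blast
  then have Lc: "L2N c" using cont_NN[OF c] by (intro L2N_bounded) auto
  have "d2 c g \<le> integral\<^sup>L NN (\<lambda>x. \<delta>)"
    unfolding d2_def
  proof (rule integral_mono_AE)
    show "integrable NN (\<lambda>x. (c x - g x)\<^sup>2)" using L2N_int_diff[OF Lc SM_L2N[OF g(1)]] .
    show "integrable NN (\<lambda>x. \<delta>)" by simp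
    show "AE x in NN. (c x - g x)\<^sup>2 \<le> \<delta>"
    proof (rule AE_I2)
      fix x assume "x \<in> space NN"
      then have "\<bar>c x - g x\<bar> < \<delta>" using g(2) by simp
      then have "(c x - g x)\<^sup>2 \<le> \<delta>\<^sup>2"
        by (metis abs_ge_zero less_imp_le power2_abs power_mono)
      also have "\<delta>\<^sup>2 \<le> \<delta>" using d by (simp add: power2_eq_square mult_le_cancel_left1)
      finally show "(c x - g x)\<^sup>2 \<le> \<delta>" .
    qed
  qed
  also have "\<dots> = \<delta> * (2 * pi)" using measure_NN_space by simp
  also have "\<dots> \<le> e / (4*pi) * (2*pi)" using d by (intro mult_right_mono) auto
  also have "\<dots> < e" using e pi_gt_zero by (simp add: field_simps)
  finally show "\<exists>g\<in>SM. d2 c g < e" using g(1) by blast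
qed



lemma measure_le_of_emeasure:
  assumes "emeasure M X \<le> ennreal r" "0 \<le> r"
  shows "measure M X \<le> r"
proof -
  have "measure M X = enn2real (emeasure M X)" by (simp add: measure_def)
  also have "\<dots> \<le> enn2real (ennreal r)" using assms by (intro enn2real_mono) auto
  also have "\<dots> = r" using assms by simp
  finally show ?thesis .
qed

lemma L2N_ind: "A \<in> sets borel \<Longrightarrow> L2N (indicator A)"
  by (intro L2N_bounded[where B=1] borel_NN) (auto simp: indicator_def)

lemma APX_ind:
  assumes A: "A \<in> sets borel"
  shows "APX (indicator A)"
proof (rule APX_limit[OF L2N_ind[OF A]])
  fix e :: real assume e: "e > 0"
  define S where "S = {0..2*pi::real}"
  define A' where "A' = A \<inter> S"
  define \<eta> where "\<eta> = e / 8"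
  have eta: "\<eta> > 0" using e by (simp add: \<eta>_def)
  have A'b: "A' \<in> sets borel" using A by (simp add: A'_def S_def)
  obtain U where U: "open U" "A' \<subseteq> U" "emeasure lborel (U - A') < ennreal \<eta>"
    using outer_regular_lborel[OF A'b eta] by blast
  obtain V where V: "open V" "- A' \<subseteq> V" "emeasure lborel (V - - A') < ennreal \<eta>"
    using outer_regular_lborel[of "- A'" \<eta>] A'b eta by (metis borel_comp)
  define C where "C = - V \<inter> {\<eta>..2*pi-\<eta>}"
  define F where "F = - U \<union> {..0} \<union> {2*pi..}"
  have "closed C" unfolding C_def using V(1) by (intro closed_Int) auto
  moreover have "closed F" unfolding F_def using U(1) by (intro closed_Un) auto
  moreover have "C \<inter> F = {}"
    using V(2) U(2) eta unfolding C_def F_def by auto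
  ultimately obtain f :: "real \<Rightarrow> real" where f: "continuous_on UNIV f" "\<And>x. f x \<in> closed_segment 1 0"
    "\<And>x. x \<in> C \<Longrightarrow> f x = 1" "\<And>x. x \<in> F \<Longrightarrow> f x = 0"
    using Urysohn[of C F 1 0] by blast
  have f01: "0 \<le> f x \<and> f x \<le> 1" for x using f(2)[of x] by (simp add: closed_segment_eq_real_ivl)
  have fc: "continuous_on {0..2*pi} f" using f(1) continuous_on_subset by blast
  have f0: "f 0 = f (2*pi)" using f(4)[of 0] f(4)[of "2*pi"] by (simp add: F_def)
  have Lf: "L2N f" using f01 cont_NN[OF fc] by (intro L2N_bounded[where B=1]) auto
  define W where "W = ((U - A') \<union> (V - - A') \<union> {0..\<eta>} \<union> {2*pi-\<eta>..2*pi}) \<inter> S"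
  have Wb: "W \<in> sets borel" unfolding W_def S_def using A'b U(1) V(1) by auto
  have pt: "(indicator A x - f x)\<^sup>2 \<le> indicator W x" if x: "x \<in> S" for x
  proof (cases "x \<in> W")
    case True
    have "\<bar>indicator A x - f x\<bar> \<le> 1" using f01[of x] by (auto simp: indicator_def)
    then have "(indicator A x - f x)\<^sup>2 \<le> 1"
      by (metis abs_ge_zero abs_le_square_iff abs_one one_power2)
    then show ?thesis using True by simp
  next
    case False
    show ?thesis
    proof (cases "x \<in> A")
      case True
      then have "x \<in> C" using False x unfolding W_def C_def A'_def S_def by auto
      then show ?thesis using True f(3) False by simp
    next
      case xA: False
      then have "x \<in> F" using False x unfolding W_def F_def A'_def S_def by auto
      then show ?thesis using xA f(4) False by simp
    qed
  qed
  have "emeasure lborel W \<le> emeasure lborel ((U - A') \<union> (V - - A') \<union> {0..\<eta>} \<union> {2*pi-\<eta>..2*pi})"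
    unfolding W_def using A'b U(1) V(1) by (intro emeasure_mono) auto
  also have "\<dots> \<le> emeasure lborel ((U - A') \<union> (V - - A') \<union> {0..\<eta>}) + emeasure lborel {2*pi-\<eta>..2*pi}"
    using A'b U(1) V(1) by (intro emeasure_subadditive) auto
  also have "\<dots> \<le> (emeasure lborel ((U - A') \<union> (V - - A')) + emeasure lborel {0..\<eta>}) + emeasure lborel {2*pi-\<eta>..2*pi}"
    using A'b U(1) V(1) by (intro add_right_mono emeasure_subadditive) auto
  also have "\<dots> \<le> ((emeasure lborel (U - A') + emeasure lborel (V - - A')) + emeasure lborel {0..\<eta>}) + emeasure lborel {2*pi-\<eta>..2*pi}"
    using A'b U(1) V(1) by (intro add_right_mono emeasure_subadditive) auto
  also have "\<dots> \<le> ((ennreal \<eta> + ennreal \<eta>) + ennreal \<eta>) + ennreal \<eta>"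
    using U(3) V(3) eta by (intro add_mono) (auto simp: emeasure_lborel_Icc)
  also have "\<dots> = ennreal (4 * \<eta>)" using eta by (simp add: ennreal_plus[symmetric])
  finally have "measure lborel W \<le> 4 * \<eta>" using eta by (intro measure_le_of_emeasure) auto
  have "d2 (indicator A) f \<le> integral\<^sup>L NN (indicator W)"
    unfolding d2_def
  proof (rule integral_mono_AE)
    show "integrable NN (\<lambda>x. (indicator A x - f x)\<^sup>2)" using L2N_int_diff[OF L2N_ind[OF A] Lf] .
    show "integrable NN (indicator W :: real \<Rightarrow> real)"
    proof (rule NN.integrable_const_bound[where B=1])
      show "(indicator W :: real \<Rightarrow> real) \<in> borel_measurable NN" using Wb by (intro borel_NN) auto
    qed (auto simp: indicator_def)
    show "AE x in NN. (indicator A x - f x)\<^sup>2 \<le> indicator W x"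
      using pt by (intro AE_I2) (simp add: S_def)
  qed
  also have "\<dots> = measure NN W" using Wb by (simp add: W_def S_def Int_absorb2)
  also have "\<dots> = measure lborel W" by (rule measure_restrict_space) (auto simp: W_def S_def)
  also have "\<dots> \<le> 4 * \<eta>" by fact
  also have "\<dots> < e" using e by (simp add: \<eta>_def)
  finally show "\<exists>v. L2N v \<and> APX v \<and> d2 (indicator A) v < e"
    using Lf APX_cont[OF fc f0] by blast
qed



lemma APX_sum:
  assumes "finite K" "\<And>k. k \<in> K \<Longrightarrow> A k \<in> sets borel"
  shows "APX (\<lambda>x. \<Sum>k\<in>K. a k * indicator (A k) x) \<and> L2N (\<lambda>x. \<Sum>k\<in>K. a k * indicator (A k) x)"
  using assms
proof (induction rule: finite_induct)
  case empty
  have "APX (\<lambda>x. 0)" unfolding APX_def d2_def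
    by (intro allI impI bexI[of _ "\<lambda>x. 0"]) (auto intro: SM_const)
  moreover have "L2N (\<lambda>x. 0)" by (intro L2N_bounded[where B=0]) auto
  ultimately show ?case by simp
next
  case (insert k K)
  have "APX (\<lambda>x. a k * indicator (A k) x + (\<Sum>k\<in>K. a k * indicator (A k) x))"
    using insert by (intro APX_add APX_scale APX_ind L2N_scale L2N_ind) auto
  moreover have "L2N (\<lambda>x. a k * indicator (A k) x + (\<Sum>k\<in>K. a k * indicator (A k) x))"
    using insert by (intro L2N_add L2N_scale L2N_ind) auto
  ultimately show ?case by (simp only: sum.insert[OF insert.hyps])
qed

lemma APX_bounded:
  assumes um[measurable]: "u \<in> borel_measurable NN" and ub: "\<And>x. x \<in> {0..2*pi} \<Longrightarrow> \<bar>u x\<bar> \<le> M"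
  shows "APX u"
proof (rule APX_limit)
  show Lu: "L2N u" using assms by (rule L2N_bounded)
  fix e :: real assume e: "e > 0"
  obtain m :: nat where m: "2*pi/e < real m" using reals_Archimedean2 by blast
  define n where "n = Suc m"
  have n: "real n > 0" "2*pi/e < real n" using m by (auto simp: n_def)
  define K :: int where "K = \<lceil>real n * M\<rceil> + 1"
  define A where "A k = {x \<in> space NN. real_of_int k \<le> real n * u x \<and> real n * u x < real_of_int k + 1}" for k :: int
  have AN: "A k \<in> sets NN" for k unfolding A_def by measurable
  then have Ab: "A k \<in> sets borel" for k using sets_restrict_space_iff[OF NN_sets_ok] by auto
  define s where "s x = (\<Sum>k\<in>{-K..K}. real_of_int k / real n * indicator (A k) x)" for x
  have sA: "APX s \<and> L2N s" unfolding s_def using Ab by (intro APX_sum) auto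
  have sx: "s x = real_of_int \<lfloor>real n * u x\<rfloor> / real n" if x: "x \<in> {0..2*pi}" for x
  proof -
    define k0 where "k0 = \<lfloor>real n * u x\<rfloor>"
    have ind: "indicator (A k) x = (if k = k0 then 1 else (0::real))" for k
      using x floor_eq_iff[of "real n * u x" k] unfolding A_def k0_def by (auto simp: indicator_def)
    have "\<bar>u x\<bar> \<le> M" using ub x by auto
    then have "u x \<le> M" "- u x \<le> M" by (auto simp: abs_le_iff)
    then have "real n * u x \<le> real n * M" "real n * (- u x) \<le> real n * M"
      using n(1) by (intro mult_left_mono; simp)+
    then have "real n * u x \<le> real n * M" "- (real n * M) \<le> real n * u x" by auto
    moreover have "real_of_int k0 \<le> real n * u x" "real n * u x < real_of_int k0 + 1"
      unfolding k0_def using floor_correct[of "real n * u x"] by auto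
    moreover have "real n * M \<le> real_of_int \<lceil>real n * M\<rceil>" by (rule le_of_int_ceiling)
    ultimately have "real_of_int k0 \<le> real_of_int K" "real_of_int (- K) < real_of_int k0 + 1"
      unfolding K_def of_int_add of_int_minus of_int_1 by linarith+
    then have "k0 \<le> K" "- K \<le> k0" by linarith+
    then have "k0 \<in> {-K..K}" by auto
    then have "s x = (\<Sum>k\<in>{-K..K}. if k = k0 then real_of_int k0 / real n else 0)"
      unfolding s_def by (intro sum.cong) (auto simp: ind)
    also have "\<dots> = real_of_int k0 / real n" using \<open>k0 \<in> {-K..K}\<close> by simp
    finally show ?thesis by (simp add: k0_def)
  qed
  have close: "\<bar>u x - s x\<bar> \<le> 1 / real n" if x: "x \<in> {0..2*pi}" for x
  proof -
    define y where "y = real n * u x"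
    have a: "real_of_int \<lfloor>y\<rfloor> \<le> y" "y < real_of_int \<lfloor>y\<rfloor> + 1"
      using floor_correct[of y] by auto
    have eq: "u x - s x = (y - real_of_int \<lfloor>y\<rfloor>) / real n"
      using n(1) sx[OF x] unfolding y_def by (simp add: field_simps)
    have "0 \<le> (y - real_of_int \<lfloor>y\<rfloor>) / real n" using a n(1) by simp
    moreover have "(y - real_of_int \<lfloor>y\<rfloor>) / real n \<le> 1 / real n"
      using n(1) by (intro divide_right_mono) (use a in linarith, simp)
    ultimately show ?thesis unfolding eq by simp
  qed
  have "d2 u s \<le> integral\<^sup>L NN (\<lambda>x. 1 / real n)"
    unfolding d2_def
  proof (rule integral_mono_AE)
    show "integrable NN (\<lambda>x. (u x - s x)\<^sup>2)" using L2N_int_diff[OF Lu conjunct2[OF sA]] .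
    show "integrable NN (\<lambda>x. 1 / real n)" by simp
    show "AE x in NN. (u x - s x)\<^sup>2 \<le> 1 / real n"
    proof (rule AE_I2)
      fix x assume "x \<in> space NN"
      then have "\<bar>u x - s x\<bar> \<le> 1 / real n" using close by simp
      then have "(u x - s x)\<^sup>2 \<le> (1 / real n)\<^sup>2"
        by (metis abs_ge_zero power2_abs power_mono)
      also have "\<dots> \<le> 1 / real n" using n(1) by (simp add: power2_eq_square divide_simps)
      finally show "(u x - s x)\<^sup>2 \<le> 1 / real n" .
    qed
  qed
  also have "\<dots> = 2 * pi / real n" using measure_NN_space by simp
  also have "\<dots> < e" using n e by (simp add: field_simps)
  finally show "\<exists>v. L2N v \<and> APX v \<and> d2 u v < e" using sA by blast
qed

lemma trunc_bound: "\<bar>(u::real) - max (- r) (min r u)\<bar> \<le> \<bar>u\<bar>" if "r \<ge> 0" for r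
  using that by (auto simp: max_def min_def)

lemma APX_all:
  assumes Lu: "L2N u"
  shows "APX u"
proof (rule APX_limit[OF Lu])
  have um[measurable]: "u \<in> borel_measurable NN" using Lu by (simp add: L2N_def)
  fix e :: real assume e: "e > 0"
  define t where "t n x = max (- real n) (min (real n) (u x))" for n :: nat and x
  have tm: "t n \<in> borel_measurable NN" for n unfolding t_def by measurable
  have tb: "\<bar>t n x\<bar> \<le> real n" for n x unfolding t_def by auto
  have Lt: "L2N (t n)" for n using tm tb by (intro L2N_bounded) auto
  have At: "APX (t n)" for n using tm tb by (intro APX_bounded) auto
  have "(\<lambda>n. integral\<^sup>L NN (\<lambda>x. (u x - t n x)\<^sup>2)) \<longlonglongrightarrow> integral\<^sup>L NN (\<lambda>x. 0)"
  proof (rule integral_dominated_convergence[where w="\<lambda>x. (u x)\<^sup>2"])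
    show "(\<lambda>x. 0::real) \<in> borel_measurable NN" by simp
    show "(\<lambda>x. (u x - t n x)\<^sup>2) \<in> borel_measurable NN" for n using tm by measurable
    show "integrable NN (\<lambda>x. (u x)\<^sup>2)" using Lu by (simp add: L2N_def)
    show "AE x in NN. (\<lambda>n. (u x - t n x)\<^sup>2) \<longlonglongrightarrow> 0"
    proof (rule AE_I2)
      fix x
      obtain N :: nat where N: "\<bar>u x\<bar> \<le> real N" using real_arch_simple by blast
      have "eventually (\<lambda>n. (u x - t n x)\<^sup>2 = 0) sequentially"
      proof (rule eventually_sequentiallyI)
        fix n assume "N \<le> n"
        then have "\<bar>u x\<bar> \<le> real n" using N by linarith
        then show "(u x - t n x)\<^sup>2 = 0" unfolding t_def by (auto simp: max_def min_def)
      qed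
      then show "(\<lambda>n. (u x - t n x)\<^sup>2) \<longlonglongrightarrow> 0" by (rule tendsto_eventually)
    qed
    show "AE x in NN. norm ((u x - t n x)\<^sup>2) \<le> (u x)\<^sup>2" for n
    proof (rule AE_I2)
      fix x
      have "\<bar>u x - t n x\<bar> \<le> \<bar>u x\<bar>" unfolding t_def by (rule trunc_bound) simp
      then show "norm ((u x - t n x)\<^sup>2) \<le> (u x)\<^sup>2"
        by (simp add: abs_le_square_iff)
    qed
  qed
  then have "(\<lambda>n. d2 u (t n)) \<longlonglongrightarrow> 0" by (simp add: d2_def)
  then have "eventually (\<lambda>n. d2 u (t n) < e) sequentially" using e by (rule order_tendstoD(2))
  then obtain N where "\<forall>n\<ge>N. d2 u (t n) < e" unfolding eventually_sequentially by blast
  then have "d2 u (t N) < e" by simp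
  then show "\<exists>v. L2N v \<and> APX v \<and> d2 u v < e" using Lt At by blast
qed



lemma bdd_int: 
  fixes u :: "real \<Rightarrow> real" and B :: real
  assumes "u \<in> borel_measurable NN" "\<And>x. x \<in> {0..2*pi} \<Longrightarrow> \<bar>u x\<bar> \<le> B"
  shows "integrable NN u"
  using assms by (intro NN.integrable_const_bound[where B=B] AE_I2) auto

lemma L2_L2N: "\<theta> \<in> L2_02pi \<Longrightarrow> L2N \<theta>"
proof -
  assume "\<theta> \<in> L2_02pi"
  then have a: "(\<lambda>x. indicator {0..2*pi} x *\<^sub>R \<theta> x) \<in> borel_measurable lborel"
    "integrable lborel (\<lambda>x. indicator {0..2*pi} x *\<^sub>R (\<theta> x)\<^sup>2)"
    unfolding L2_02pi_def set_borel_measurable_def set_integrable_def by auto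
  have "\<theta> \<in> borel_measurable NN" using a(1) borel_measurable_restrict_space_iff[OF NN_sets_ok] by blast
  moreover have "integrable NN (\<lambda>x. (\<theta> x)\<^sup>2)" using a(2) integrable_restrict_space[OF NN_sets_ok] by blast
  ultimately show ?thesis unfolding L2N_def by blast
qed

lemma LINT_NN: "(LINT s:{0..2*pi}|lborel. f s) = integral\<^sup>L NN (f :: real \<Rightarrow> real)"
  unfolding set_lebesgue_integral_def by (rule integral_restrict_space[OF NN_sets_ok, symmetric])

lemma L2N_int: "L2N u \<Longrightarrow> integrable NN u"
proof -
  assume L: "L2N u"
  show ?thesis
  proof (rule Bochner_Integration.integrable_bound)
    show "integrable NN (\<lambda>x. 1 + (u x)\<^sup>2)" using L by (auto simp: L2N_def)
    show "u \<in> borel_measurable NN" using L by (simp add: L2N_def)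
    show "AE x in NN. norm (u x) \<le> norm (1 + (u x)\<^sup>2)"
    proof (rule AE_I2)
      fix x
      have "\<bar>u x\<bar> \<le> 1 + (u x)\<^sup>2"
        using sum_squares_ge_zero[of "\<bar>u x\<bar> - 1" 0] by (simp add: power2_eq_square algebra_simps)
      then show "norm (u x) \<le> norm (1 + (u x)\<^sup>2)" by simp
    qed
  qed
qed

lemma SM_bound: "g \<in> SM \<Longrightarrow> \<exists>B>0. \<forall>x\<in>{0..2*pi}. \<bar>g x\<bar> \<le> B"
  using cont_bounded[of g] SM_cont continuous_on_subset by (metis subset_UNIV)

lemma SM_NN: "g \<in> SM \<Longrightarrow> g \<in> borel_measurable NN"
  using SM_borel borel_NN by blast

definition Phi :: "(real \<Rightarrow> real) \<Rightarrow> (real \<Rightarrow> real) \<Rightarrow> real \<times> real \<times> real" where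
  "Phi \<theta> w = (integral\<^sup>L NN w, integral\<^sup>L NN (\<lambda>x. - sin (\<theta> x) * w x), integral\<^sup>L NN (\<lambda>x. cos (\<theta> x) * w x))"

lemma SM_prod_int:
  assumes th: "\<theta> \<in> borel_measurable NN" and w: "w \<in> SM"
  shows "integrable NN w" "integrable NN (\<lambda>x. - sin (\<theta> x) * w x)" "integrable NN (\<lambda>x. cos (\<theta> x) * w x)"
proof -
  obtain B where B: "\<forall>x\<in>{0..2*pi}. \<bar>w x\<bar> \<le> B" using SM_bound[OF w] by blast
  have wm[measurable]: "w \<in> borel_measurable NN" by (rule SM_NN[OF w])
  note th[measurable]
  show "integrable NN w" using B by (intro bdd_int[where B=B]) auto
  show "integrable NN (\<lambda>x. - sin (\<theta> x) * w x)"
  proof (rule bdd_int[where B=B])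
    fix x assume "x \<in> {0..2*pi}"
    then have "\<bar>sin (\<theta> x)\<bar> * \<bar>w x\<bar> \<le> 1 * B" using B by (intro mult_mono) auto
    then show "\<bar>- sin (\<theta> x) * w x\<bar> \<le> B" by (simp add: abs_mult)
  qed measurable
  show "integrable NN (\<lambda>x. cos (\<theta> x) * w x)"
  proof (rule bdd_int[where B=B])
    fix x assume "x \<in> {0..2*pi}"
    then have "\<bar>cos (\<theta> x)\<bar> * \<bar>w x\<bar> \<le> 1 * B" using B by (intro mult_mono) auto
    then show "\<bar>cos (\<theta> x) * w x\<bar> \<le> B" by (simp add: abs_mult)
  qed measurable
qed

lemma Phi_subspace:
  assumes th: "\<theta> \<in> borel_measurable NN"
  shows "subspace (Phi \<theta> ` SM)"
  unfolding subspace_def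
proof (intro conjI ballI allI)
  have "Phi \<theta> (\<lambda>x. 0) = 0" by (simp add: Phi_def zero_prod_def)
  then show "0 \<in> Phi \<theta> ` SM" using SM_const by (metis image_eqI)
next
  fix v1 v2 assume "v1 \<in> Phi \<theta> ` SM" "v2 \<in> Phi \<theta> ` SM"
  then obtain w1 w2 where w: "w1 \<in> SM" "w2 \<in> SM" "v1 = Phi \<theta> w1" "v2 = Phi \<theta> w2" by blast
  have "Phi \<theta> (\<lambda>x. w1 x + w2 x) = v1 + v2"
    using SM_prod_int[OF th w(1)] SM_prod_int[OF th w(2)] w(3,4)
    by (simp add: Phi_def algebra_simps)
  then show "v1 + v2 \<in> Phi \<theta> ` SM" using SM_add[OF w(1,2)] by (metis image_eqI)
next
  fix c :: real and v assume "v \<in> Phi \<theta> ` SM"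
  then obtain w where w: "w \<in> SM" "v = Phi \<theta> w" by blast
  have "Phi \<theta> (\<lambda>x. c * w x) = c *\<^sub>R v"
    using w(2) by (simp add: Phi_def algebra_simps)
  then show "c *\<^sub>R v \<in> Phi \<theta> ` SM" using SM_scale[OF w(1)] by (metis image_eqI)
qed



lemma cos_sin_int:
  fixes \<theta> :: "real \<Rightarrow> real" and b :: real
  assumes "\<theta> \<in> borel_measurable NN"
  shows "integrable NN (\<lambda>x. cos (\<theta> x + b))" "integrable NN (\<lambda>x. sin (\<theta> x + b))"
proof -
  note assms[measurable]
  have m1: "(\<lambda>x. cos (\<theta> x + b)) \<in> borel_measurable NN" by measurable
  have m2: "(\<lambda>x. sin (\<theta> x + b)) \<in> borel_measurable NN" by measurable
  show "integrable NN (\<lambda>x. cos (\<theta> x + b))" by (rule bdd_int[where B=1, OF m1]) simp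
  show "integrable NN (\<lambda>x. sin (\<theta> x + b))" by (rule bdd_int[where B=1, OF m2]) simp
qed

lemma Z_of_AE:
  assumes th: "\<theta> \<in> M_set" and c: "(c1, c2, c3) \<noteq> (0::real \<times> real \<times> real)"
    and ae: "AE x in NN. c1 - c2 * sin (\<theta> x) + c3 * cos (\<theta> x) = 0"
  shows "\<theta> \<in> Z_set"
proof -
  have Lth: "L2N \<theta>" using th by (intro L2_L2N) (simp add: M_set_def)
  have thmeas[measurable]: "\<theta> \<in> borel_measurable NN" using Lth by (simp add: L2N_def)
  have icos: "integral\<^sup>L NN (\<lambda>x. cos (\<theta> x)) = 0" and isin: "integral\<^sup>L NN (\<lambda>x. sin (\<theta> x)) = 0"
    using th by (simp_all add: M_set_def LINT_NN)
  define r where "r = sqrt (c2\<^sup>2 + c3\<^sup>2)"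
  have r0: "r \<ge> 0" by (simp add: r_def)
  show ?thesis
  proof (cases "r = 0")
    case True
    then have "c2 = 0" "c3 = 0" unfolding r_def by (simp_all add: sum_power2_eq_zero_iff)
    then have "AE x in NN. c1 = 0" using ae by simp
    then have "integral\<^sup>L NN (\<lambda>x. c1) = integral\<^sup>L NN (\<lambda>x. 0)" by (intro integral_cong_AE) auto
    then have "c1 * (2 * pi) = 0" using measure_NN_space by simp
    then have "c1 = 0" by simp
    with \<open>c2 = 0\<close> \<open>c3 = 0\<close> c show ?thesis by (simp add: zero_prod_def)
  next
    case False
    then have rp: "r > 0" using r0 by simp
    have r2: "r\<^sup>2 = c2\<^sup>2 + c3\<^sup>2" unfolding r_def by simp
    have "(c3 / r)\<^sup>2 + (c2 / r)\<^sup>2 = (c2\<^sup>2 + c3\<^sup>2) / r\<^sup>2" by (simp add: power_divide add_divide_distrib)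
    also have "\<dots> = r\<^sup>2 / r\<^sup>2" by (simp only: r2)
    also have "\<dots> = 1" using rp by simp
    finally have "(c3 / r)\<^sup>2 + (c2 / r)\<^sup>2 = 1" .
    then obtain \<beta> where b: "c3 / r = cos \<beta>" "c2 / r = sin \<beta>" using sincos_total_2pi by metis
    have c23: "c3 = r * cos \<beta>" "c2 = r * sin \<beta>" using b rp by (simp_all add: field_simps)
    have ae2: "AE x in NN. cos (\<theta> x + \<beta>) = - c1 / r"
      using ae
    proof (rule AE_mp, intro AE_I2 impI)
      fix x assume "c1 - c2 * sin (\<theta> x) + c3 * cos (\<theta> x) = 0"
      then have "c1 + r * (cos (\<theta> x) * cos \<beta> - sin (\<theta> x) * sin \<beta>) = 0"
        unfolding c23 by (simp add: algebra_simps)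
      then have "c1 + r * cos (\<theta> x + \<beta>) = 0" by (simp add: cos_add)
      then show "cos (\<theta> x + \<beta>) = - c1 / r" using rp by (simp add: field_simps)
    qed
    have "integral\<^sup>L NN (\<lambda>x. cos (\<theta> x + \<beta>)) = integral\<^sup>L NN (\<lambda>x. cos \<beta> * cos (\<theta> x) - sin \<beta> * sin (\<theta> x))"
      by (simp add: cos_add algebra_simps)
    also have "\<dots> = cos \<beta> * integral\<^sup>L NN (\<lambda>x. cos (\<theta> x)) - sin \<beta> * integral\<^sup>L NN (\<lambda>x. sin (\<theta> x))"
      using cos_sin_int[OF thmeas, of 0] by simp
    also have "\<dots> = 0" by (simp add: icos isin)
    finally have i0: "integral\<^sup>L NN (\<lambda>x. cos (\<theta> x + \<beta>)) = 0" .
    have "integral\<^sup>L NN (\<lambda>x. cos (\<theta> x + \<beta>)) = integral\<^sup>L NN (\<lambda>x. - c1 / r)"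
      using ae2 by (intro integral_cong_AE) auto
    then have "- c1 / r * (2 * pi) = 0" using i0 measure_NN_space by simp
    then have c10: "c1 = 0" using rp by simp
    have ae3: "AE x in NN. \<exists>k::int. \<theta> x - (pi/2 - \<beta>) = of_int k * pi"
      using ae2
    proof (rule AE_mp, intro AE_I2 impI)
      fix x assume "cos (\<theta> x + \<beta>) = - c1 / r"
      then have "cos (\<theta> x + \<beta>) = 0" using c10 by simp
      then obtain i :: int where i: "odd i" "\<theta> x + \<beta> = of_int i * (pi/2)" using cos_zero_iff_int by blast
      then obtain k :: int where k: "i = 2 * k + 1" by (metis oddE)
      have "\<theta> x - (pi/2 - \<beta>) = of_int k * pi" using i(2) unfolding k by (simp add: algebra_simps)
      then show "\<exists>k::int. \<theta> x - (pi/2 - \<beta>) = of_int k * pi" by blast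
    qed
    then have "AE x in lborel. x \<in> {0..2*pi} \<longrightarrow> (\<exists>k::int. \<theta> x - (pi/2 - \<beta>) = of_int k * pi)"
      using AE_restrict_space_iff[OF NN_sets_ok] by simp
    then show ?thesis using th unfolding Z_set_def by blast
  qed
qed



lemma Phi_surj:
  assumes th: "\<theta> \<in> M_set" and nz: "\<theta> \<notin> Z_set"
  shows "Phi \<theta> ` SM = UNIV"
proof (rule ccontr)
  assume ne: "Phi \<theta> ` SM \<noteq> UNIV"
  have Lth: "L2N \<theta>" using th by (intro L2_L2N) (simp add: M_set_def)
  have thmeas[measurable]: "\<theta> \<in> borel_measurable NN" using Lth by (simp add: L2N_def)
  let ?V = "Phi \<theta> ` SM"
  have sub: "subspace ?V" by (rule Phi_subspace[OF thmeas])
  then have "span ?V = ?V" by (simp add: span_eq_iff)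
  then have "dim ?V \<noteq> DIM(real \<times> real \<times> real)" using ne dim_eq_full by metis
  then have "dim ?V < DIM(real \<times> real \<times> real)" using dim_subset_UNIV[of ?V] by linarith
  then obtain a where a: "a \<noteq> 0" "span ?V \<subseteq> {x. a \<bullet> x = 0}" using lowdim_subset_hyperplane by blast
  obtain c1 c2 c3 where aeq: "a = (c1, c2, c3)" by (metis prod_cases3)
  define G where "G x = c1 - c2 * sin (\<theta> x) + c3 * cos (\<theta> x)" for x
  have Gm[measurable]: "G \<in> borel_measurable NN" unfolding G_def by measurable
  have Gb: "\<bar>G x\<bar> \<le> \<bar>c1\<bar> + \<bar>c2\<bar> + \<bar>c3\<bar>" for x
  proof -
    have "\<bar>c2 * sin (\<theta> x)\<bar> \<le> \<bar>c2\<bar> * 1" unfolding abs_mult by (intro mult_left_mono) auto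
    moreover have "\<bar>c3 * cos (\<theta> x)\<bar> \<le> \<bar>c3\<bar> * 1" unfolding abs_mult by (intro mult_left_mono) auto
    ultimately show ?thesis unfolding G_def by linarith
  qed
  have LG: "L2N G" using Gb by (intro L2N_bounded[OF Gm]) auto
  have orth: "integral\<^sup>L NN (\<lambda>x. G x * w x) = 0" if w: "w \<in> SM" for w
  proof -
    have "Phi \<theta> w \<in> span ?V" using w by (intro span_base) auto
    then have "a \<bullet> Phi \<theta> w = 0" using a(2) by auto
    then have "c1 * integral\<^sup>L NN w + c2 * integral\<^sup>L NN (\<lambda>x. - sin (\<theta> x) * w x) + c3 * integral\<^sup>L NN (\<lambda>x. cos (\<theta> x) * w x) = 0"
      unfolding aeq Phi_def by (simp add: inner_Pair)
    moreover have "integral\<^sup>L NN (\<lambda>x. G x * w x) = c1 * integral\<^sup>L NN w + c2 * integral\<^sup>L NN (\<lambda>x. - sin (\<theta> x) * w x) + c3 * integral\<^sup>L NN (\<lambda>x. cos (\<theta> x) * w x)"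
    proof -
      have "integral\<^sup>L NN (\<lambda>x. G x * w x) = integral\<^sup>L NN (\<lambda>x. c1 * w x + c2 * (- sin (\<theta> x) * w x) + c3 * (cos (\<theta> x) * w x))"
        unfolding G_def by (simp add: algebra_simps)
      also have "\<dots> = c1 * integral\<^sup>L NN w + c2 * integral\<^sup>L NN (\<lambda>x. - sin (\<theta> x) * w x) + c3 * integral\<^sup>L NN (\<lambda>x. cos (\<theta> x) * w x)"
        using SM_prod_int[OF thmeas w] by simp
      finally show ?thesis .
    qed
    ultimately show ?thesis by simp
  qed
  have sq_le: "integral\<^sup>L NN (\<lambda>x. (G x)\<^sup>2) \<le> e" if e: "e > 0" for e
  proof -
    obtain g where g: "g \<in> SM" "d2 G g < e" using APX_all[OF LG] e unfolding APX_def by blast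
    have Lg: "L2N g" by (rule SM_L2N[OF g(1)])
    obtain B where B: "\<forall>x\<in>{0..2*pi}. \<bar>g x\<bar> \<le> B" using SM_bound[OF g(1)] by blast
    have gm[measurable]: "g \<in> borel_measurable NN" by (rule SM_NN[OF g(1)])
    have intGg: "integrable NN (\<lambda>x. G x * g x)"
    proof (rule bdd_int[where B="(\<bar>c1\<bar> + \<bar>c2\<bar> + \<bar>c3\<bar>) * B"])
      fix x assume "x \<in> {0..2*pi}"
      then show "\<bar>G x * g x\<bar> \<le> (\<bar>c1\<bar> + \<bar>c2\<bar> + \<bar>c3\<bar>) * B"
        unfolding abs_mult using B Gb[of x] by (intro mult_mono) auto
    qed measurable
    have intGGg: "integrable NN (\<lambda>x. G x * (G x - g x))"
    proof -
      have "integrable NN (\<lambda>x. (G x)\<^sup>2 - G x * g x)"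
        using L2N_int_sq[OF LG] intGg by (rule Bochner_Integration.integrable_diff)
      then show ?thesis by (simp add: algebra_simps power2_eq_square)
    qed
    have "integral\<^sup>L NN (\<lambda>x. (G x)\<^sup>2) = integral\<^sup>L NN (\<lambda>x. G x * (G x - g x) + G x * g x)"
      by (simp add: algebra_simps power2_eq_square)
    also have "\<dots> = integral\<^sup>L NN (\<lambda>x. G x * (G x - g x)) + integral\<^sup>L NN (\<lambda>x. G x * g x)"
      using intGGg intGg by (rule Bochner_Integration.integral_add)
    also have "\<dots> = integral\<^sup>L NN (\<lambda>x. G x * (G x - g x))" using orth[OF g(1)] by simp
    also have "\<dots> \<le> integral\<^sup>L NN (\<lambda>x. (G x)\<^sup>2 / 2 + (G x - g x)\<^sup>2 / 2)"
    proof (rule integral_mono)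
      show "integrable NN (\<lambda>x. (G x)\<^sup>2 / 2 + (G x - g x)\<^sup>2 / 2)"
        using L2N_int_sq[OF LG] L2N_int_diff[OF LG Lg] by simp
      fix x
      show "G x * (G x - g x) \<le> (G x)\<^sup>2 / 2 + (G x - g x)\<^sup>2 / 2"
        using sum_squares_ge_zero[of "G x - (G x - g x)" 0] by (simp add: power2_eq_square field_simps)
    qed (rule intGGg)
    also have "\<dots> = integral\<^sup>L NN (\<lambda>x. (G x)\<^sup>2) / 2 + d2 G g / 2"
      unfolding d2_def using L2N_int_sq[OF LG] L2N_int_diff[OF LG Lg] by simp
    finally show ?thesis using g(2) by linarith
  qed
  have "integral\<^sup>L NN (\<lambda>x. (G x)\<^sup>2) \<le> 0"
  proof (rule ccontr)
    assume "\<not> integral\<^sup>L NN (\<lambda>x. (G x)\<^sup>2) \<le> 0"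
    then have p: "integral\<^sup>L NN (\<lambda>x. (G x)\<^sup>2) > 0" by simp
    show False using sq_le[of "integral\<^sup>L NN (\<lambda>x. (G x)\<^sup>2) / 2"] p by linarith
  qed
  moreover have "integral\<^sup>L NN (\<lambda>x. (G x)\<^sup>2) \<ge> 0" by (rule integral_nonneg_AE) auto
  ultimately have "integral\<^sup>L NN (\<lambda>x. (G x)\<^sup>2) = 0" by linarith
  then have "AE x in NN. (G x)\<^sup>2 = 0"
    using integral_nonneg_eq_0_iff_AE[OF L2N_int_sq[OF LG]] by auto
  then have "AE x in NN. c1 - c2 * sin (\<theta> x) + c3 * cos (\<theta> x) = 0"
    by eventually_elim (simp add: G_def)
  moreover have "(c1, c2, c3) \<noteq> 0" using a(1) aeq by simp
  ultimately have "\<theta> \<in> Z_set" using Z_of_AE[OF th] by blast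
  then show False using nz by simp
qed



lemma lip_cos: "\<bar>cos (x::real) - cos y\<bar> \<le> \<bar>x - y\<bar>"
proof -
  have "\<bar>cos x - cos y\<bar> = 2 * \<bar>sin ((x + y) / 2)\<bar> * \<bar>sin ((y - x) / 2)\<bar>"
    by (simp add: cos_diff_cos abs_mult)
  also have "\<dots> \<le> 2 * 1 * \<bar>(y - x) / 2\<bar>"
    by (intro mult_mono abs_sin_x_le_abs_x) auto
  finally show ?thesis by simp
qed

lemma lip_sin: "\<bar>sin (x::real) - sin y\<bar> \<le> \<bar>x - y\<bar>"
proof -
  have "\<bar>sin x - sin y\<bar> = 2 * \<bar>sin ((x - y) / 2)\<bar> * \<bar>cos ((x + y) / 2)\<bar>"
    by (simp add: sin_diff_sin abs_mult)
  also have "\<dots> \<le> 2 * \<bar>(x - y) / 2\<bar> * 1"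
    by (intro mult_mono abs_sin_x_le_abs_x) auto
  finally show ?thesis by simp
qed

lemma sin_taylor1: "\<bar>sin (x::real) - x\<bar> \<le> x\<^sup>2 / 2"
  using Maclaurin_sin_bound[of x 2] by (simp add: numeral_2_eq_2 sin_coeff_def)

lemma cos_taylor1: "\<bar>cos (x::real) - 1\<bar> \<le> x\<^sup>2 / 2"
proof -
  have "cos x = cos (2 * (x/2))" by simp
  also have "\<dots> = 1 - 2 * (sin (x/2))\<^sup>2" by (rule cos_double_sin)
  finally have "\<bar>cos x - 1\<bar> = 2 * (sin (x/2))\<^sup>2" by simp
  also have "\<dots> \<le> 2 * (x/2)\<^sup>2"
  proof -
    have "(sin (x/2))\<^sup>2 \<le> (x/2)\<^sup>2" using abs_sin_x_le_abs_x[of "x/2"] abs_le_square_iff by blast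
    then show ?thesis by simp
  qed
  also have "\<dots> = x\<^sup>2 / 2" by (simp add: power2_eq_square)
  finally show ?thesis .
qed

lemma cos_taylor: "\<bar>cos ((a::real) + t) - cos a + sin a * t\<bar> \<le> t\<^sup>2"
proof -
  have e: "cos (a + t) - cos a + sin a * t = cos a * (cos t - 1) - sin a * (sin t - t)"
    by (simp add: cos_add algebra_simps)
  have "\<bar>cos (a + t) - cos a + sin a * t\<bar> \<le> \<bar>cos a * (cos t - 1)\<bar> + \<bar>sin a * (sin t - t)\<bar>"
    unfolding e by (rule abs_triangle_ineq4)
  also have "\<dots> = \<bar>cos a\<bar> * \<bar>cos t - 1\<bar> + \<bar>sin a\<bar> * \<bar>sin t - t\<bar>" by (simp only: abs_mult)
  also have "\<dots> \<le> 1 * (t\<^sup>2 / 2) + 1 * (t\<^sup>2 / 2)"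
    using cos_taylor1[of t] sin_taylor1[of t] by (intro add_mono mult_mono) auto
  finally show ?thesis by simp
qed

lemma sin_taylor: "\<bar>sin ((a::real) + t) - sin a - cos a * t\<bar> \<le> t\<^sup>2"
proof -
  have e: "sin (a + t) - sin a - cos a * t = sin a * (cos t - 1) + cos a * (sin t - t)"
    by (simp add: sin_add algebra_simps)
  have "\<bar>sin (a + t) - sin a - cos a * t\<bar> \<le> \<bar>sin a * (cos t - 1)\<bar> + \<bar>cos a * (sin t - t)\<bar>"
    unfolding e by (rule abs_triangle_ineq)
  also have "\<dots> = \<bar>sin a\<bar> * \<bar>cos t - 1\<bar> + \<bar>cos a\<bar> * \<bar>sin t - t\<bar>" by (simp only: abs_mult)
  also have "\<dots> \<le> 1 * (t\<^sup>2 / 2) + 1 * (t\<^sup>2 / 2)"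
    using cos_taylor1[of t] sin_taylor1[of t] by (intro add_mono mult_mono) auto
  finally show ?thesis by simp
qed


lemma int_abs_le:
  fixes f g :: "real \<Rightarrow> real"
  assumes "integrable NN f" "integrable NN g" "\<And>x. x \<in> {0..2*pi} \<Longrightarrow> \<bar>f x\<bar> \<le> g x"
  shows "\<bar>integral\<^sup>L NN f\<bar> \<le> integral\<^sup>L NN g"
proof -
  have "\<bar>integral\<^sup>L NN f\<bar> \<le> integral\<^sup>L NN (\<lambda>x. \<bar>f x\<bar>)"
    using integral_abs_bound[of NN f] by simp
  also have "\<dots> \<le> integral\<^sup>L NN g"
    using assms by (intro integral_mono_AE AE_I2) auto
  finally show ?thesis .
qed

lemma L2N_L2: "L2N \<eta> \<Longrightarrow> \<eta> \<in> L2_02pi"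
proof -
  assume L: "L2N \<eta>"
  have "(\<lambda>x. indicator {0..2*pi} x *\<^sub>R \<eta> x) \<in> borel_measurable lborel"
    using L unfolding L2N_def by (intro borel_measurable_restrict_space_iff[OF NN_sets_ok, THEN iffD1]) simp
  moreover have "integrable lborel (\<lambda>x. indicator {0..2*pi} x *\<^sub>R (\<eta> x)\<^sup>2)"
    using L unfolding L2N_def by (intro integrable_restrict_space[OF NN_sets_ok, THEN iffD1]) simp
  ultimately show ?thesis unfolding L2_02pi_def set_borel_measurable_def set_integrable_def by blast
qed

lemma cont_lip:
  fixes f :: "'a::metric_space \<Rightarrow> real"
  assumes "L \<ge> 0" "\<And>x y. \<bar>f x - f y\<bar> \<le> L * dist x y"
  shows "continuous_on S f"
proof (rule lipschitz_on_continuous_on)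
  show "lipschitz_on L S f" using assms by (intro lipschitz_onI) (auto simp: dist_real_def)
qed

lemma abs_le_sq: "\<bar>y::real\<bar> \<le> a / 2 + y\<^sup>2 / (2 * a)" if "a > 0" for a
proof -
  have "0 \<le> (\<bar>y\<bar> - a)\<^sup>2" by simp
  then have "2 * a * \<bar>y\<bar> \<le> y\<^sup>2 + a\<^sup>2" by (simp add: power2_eq_square algebra_simps)
  then have "\<bar>y\<bar> \<le> (y\<^sup>2 + a\<^sup>2) / (2 * a)" using that by (subst pos_le_divide_eq) (auto simp: mult.commute)
  also have "(y\<^sup>2 + a\<^sup>2) / (2 * a) = a / 2 + y\<^sup>2 / (2 * a)" using that
    by (simp add: add_divide_distrib power2_eq_square)
  finally show ?thesis .
qed



lemma cont_comp_meas:
  fixes f :: "'a \<Rightarrow> real" and c :: "real \<Rightarrow> real"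
  assumes "f \<in> borel_measurable M" "continuous_on UNIV c"
  shows "(\<lambda>x. c (f x)) \<in> borel_measurable M"
  using measurable_compose[OF assms(1) borel_measurable_continuous_onI[OF assms(2)]] by simp

lemma main_construct:
  fixes h :: int
  assumes th: "\<theta> \<in> M_set" and nz: "\<theta> \<notin> Z_set" and e: "\<epsilon> > 0"
  shows "\<exists>\<eta>\<in>smooth_index_set h. L2_dist \<theta> \<eta> < \<epsilon>"
proof -
  have Lth: "L2N \<theta>" using th by (intro L2_L2N) (simp add: M_set_def)
  have thmeas[measurable]: "\<theta> \<in> borel_measurable NN" using Lth by (simp add: L2N_def)
  have ith: "integral\<^sup>L NN \<theta> = 2 * pi\<^sup>2" and icos: "integral\<^sup>L NN (\<lambda>x. cos (\<theta> x)) = 0"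
    and isin: "integral\<^sup>L NN (\<lambda>x. sin (\<theta> x)) = 0"
    using th by (simp_all add: M_set_def LINT_NN)
  have surj: "Phi \<theta> ` SM = UNIV" by (rule Phi_surj[OF th nz])
  obtain w1 where w1: "w1 \<in> SM" "Phi \<theta> w1 = (1, 0, 0)" using surj by (metis UNIV_I imageE)
  obtain w2 where w2: "w2 \<in> SM" "Phi \<theta> w2 = (0, 1, 0)" using surj by (metis UNIV_I imageE)
  obtain w3 where w3: "w3 \<in> SM" "Phi \<theta> w3 = (0, 0, 1)" using surj by (metis UNIV_I imageE)
  note i1 = SM_prod_int[OF thmeas w1(1)] and i2 = SM_prod_int[OF thmeas w2(1)] and i3 = SM_prod_int[OF thmeas w3(1)]
  have w1v: "integral\<^sup>L NN w1 = 1" "integral\<^sup>L NN (\<lambda>x. - sin (\<theta> x) * w1 x) = 0" "integral\<^sup>L NN (\<lambda>x. cos (\<theta> x) * w1 x) = 0"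
    using w1(2) by (simp_all add: Phi_def)
  have w2v: "integral\<^sup>L NN w2 = 0" "integral\<^sup>L NN (\<lambda>x. - sin (\<theta> x) * w2 x) = 1" "integral\<^sup>L NN (\<lambda>x. cos (\<theta> x) * w2 x) = 0"
    using w2(2) by (simp_all add: Phi_def)
  have w3v: "integral\<^sup>L NN w3 = 0" "integral\<^sup>L NN (\<lambda>x. - sin (\<theta> x) * w3 x) = 0" "integral\<^sup>L NN (\<lambda>x. cos (\<theta> x) * w3 x) = 1"
    using w3(2) by (simp_all add: Phi_def)
  obtain B1 where B1: "B1 > 0" "\<forall>x\<in>{0..2*pi}. \<bar>w1 x\<bar> \<le> B1" using SM_bound[OF w1(1)] by blast
  obtain B2 where B2: "B2 > 0" "\<forall>x\<in>{0..2*pi}. \<bar>w2 x\<bar> \<le> B2" using SM_bound[OF w2(1)] by blast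
  obtain B3 where B3: "B3 > 0" "\<forall>x\<in>{0..2*pi}. \<bar>w3 x\<bar> \<le> B3" using SM_bound[OF w3(1)] by blast
  define B where "B = B1 + B2 + B3"
  have Bp: "B > 0" using B1 B2 B3 by (simp add: B_def)
  have wB: "\<bar>w1 x\<bar> \<le> B" "\<bar>w2 x\<bar> \<le> B" "\<bar>w3 x\<bar> \<le> B" if "x \<in> {0..2*pi}" for x
  proof -
    have a: "\<bar>w1 x\<bar> \<le> B1" "\<bar>w2 x\<bar> \<le> B2" "\<bar>w3 x\<bar> \<le> B3" using B1(2) B2(2) B3(2) that by blast+
    show "\<bar>w1 x\<bar> \<le> B" "\<bar>w2 x\<bar> \<le> B" "\<bar>w3 x\<bar> \<le> B" using a B1(1) B2(1) B3(1) unfolding B_def by linarith+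
  qed
  have wm[measurable]: "w1 \<in> borel_measurable NN" "w2 \<in> borel_measurable NN" "w3 \<in> borel_measurable NN"
    using SM_NN w1 w2 w3 by auto
  define \<tau> where "\<tau> t x = fst t * w1 x + fst (snd t) * w2 x + snd (snd t) * w3 x" for t :: "real \<times> real \<times> real" and x
  have \<tau>SM: "\<tau> t \<in> SM" for t
    unfolding \<tau>_def using w1(1) w2(1) w3(1) by (intro SM_add SM_scale)
  have \<tau>m[measurable]: "\<tau> t \<in> borel_measurable NN" for t using SM_NN[OF \<tau>SM] .
  have \<tau>B: "\<bar>\<tau> t x\<bar> \<le> B * (\<bar>fst t\<bar> + \<bar>fst (snd t)\<bar> + \<bar>snd (snd t)\<bar>)" if x: "x \<in> {0..2*pi}" for t x
  proof -
    have "\<bar>\<tau> t x\<bar> \<le> \<bar>fst t\<bar> * \<bar>w1 x\<bar> + \<bar>fst (snd t)\<bar> * \<bar>w2 x\<bar> + \<bar>snd (snd t)\<bar> * \<bar>w3 x\<bar>"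
      unfolding \<tau>_def abs_mult[symmetric] by (rule order.trans[OF abs_triangle_ineq add_right_mono[OF abs_triangle_ineq]])
    also have "\<dots> \<le> \<bar>fst t\<bar> * B + \<bar>fst (snd t)\<bar> * B + \<bar>snd (snd t)\<bar> * B"
      using wB[OF x] by (intro add_mono mult_left_mono) auto
    finally show ?thesis by (simp add: algebra_simps)
  qed
  have \<tau>diff: "\<tau> t x - \<tau> s x = \<tau> (t - s) x" for t s x
    unfolding \<tau>_def by (simp add: algebra_simps)
  have \<tau>lip: "\<bar>\<tau> t x - \<tau> s x\<bar> \<le> 3 * B * dist t s" if x: "x \<in> {0..2*pi}" for t s x
  proof -
    have "\<bar>\<tau> t x - \<tau> s x\<bar> \<le> B * (\<bar>fst (t - s)\<bar> + \<bar>fst (snd (t - s))\<bar> + \<bar>snd (snd (t - s))\<bar>)"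
      unfolding \<tau>diff using \<tau>B[OF x] .
    also have "\<dots> \<le> B * (dist t s + dist t s + dist t s)"
    proof -
      have "\<bar>fst (t - s)\<bar> \<le> dist t s" using dist_fst_le[of t s] by (simp add: dist_real_def)
      moreover have "\<bar>fst (snd (t - s))\<bar> \<le> dist t s"
        using dist_fst_le[of "snd t" "snd s"] dist_snd_le[of t s] by (simp add: dist_real_def)
      moreover have "\<bar>snd (snd (t - s))\<bar> \<le> dist t s"
        using dist_snd_le[of "snd t" "snd s"] dist_snd_le[of t s] by (simp add: dist_real_def)
      ultimately show ?thesis using Bp by (intro mult_left_mono) auto
    qed
    finally show ?thesis by (simp add: algebra_simps)
  qed
  have \<tau>i: "integral\<^sup>L NN (\<tau> t) = fst t" "integral\<^sup>L NN (\<lambda>x. - sin (\<theta> x) * \<tau> t x) = fst (snd t)"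
    "integral\<^sup>L NN (\<lambda>x. cos (\<theta> x) * \<tau> t x) = snd (snd t)" for t
  proof -
    show "integral\<^sup>L NN (\<tau> t) = fst t"
      unfolding \<tau>_def using i1 i2 i3 w1v w2v w3v by simp
    have "integral\<^sup>L NN (\<lambda>x. - sin (\<theta> x) * \<tau> t x) = integral\<^sup>L NN (\<lambda>x. fst t * (- sin (\<theta> x) * w1 x) + fst (snd t) * (- sin (\<theta> x) * w2 x) + snd (snd t) * (- sin (\<theta> x) * w3 x))"
      unfolding \<tau>_def by (simp add: algebra_simps)
    also have "\<dots> = fst (snd t)" using i1 i2 i3 w1v w2v w3v by simp
    finally show "integral\<^sup>L NN (\<lambda>x. - sin (\<theta> x) * \<tau> t x) = fst (snd t)" .
    have "integral\<^sup>L NN (\<lambda>x. cos (\<theta> x) * \<tau> t x) = integral\<^sup>L NN (\<lambda>x. fst t * (cos (\<theta> x) * w1 x) + fst (snd t) * (cos (\<theta> x) * w2 x) + snd (snd t) * (cos (\<theta> x) * w3 x))"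
      unfolding \<tau>_def by (simp add: algebra_simps)
    also have "\<dots> = snd (snd t)" using i1 i2 i3 w1v w2v w3v by simp
    finally show "integral\<^sup>L NN (\<lambda>x. cos (\<theta> x) * \<tau> t x) = snd (snd t)" .
  qed

  define u where "u x = \<theta> x - of_int h * x" for x
  have hc: "continuous_on {0..2*pi} (\<lambda>x::real. of_int h * x)" by (intro continuous_intros)
  have Lh: "L2N (\<lambda>x. of_int h * x)"
  proof (rule L2N_bounded[OF cont_NN[OF hc], where B="\<bar>of_int h\<bar> * (2*pi)"])
    fix x :: real assume "x \<in> {0..2*pi}"
    then show "\<bar>of_int h * x\<bar> \<le> \<bar>of_int h\<bar> * (2*pi)" unfolding abs_mult by (intro mult_left_mono) auto
  qed
  have Lu: "L2N u" unfolding u_def by (rule L2N_diff[OF Lth Lh])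
  define K where "K = 1/(4*pi) + 36*pi*B\<^sup>2 + 1"
  have Kp: "K > 0" unfolding K_def by (simp add: add_pos_nonneg)
  define r where "r = min (1/(36*pi*B\<^sup>2)) (min 1 (\<epsilon>\<^sup>2/(2*K)))"
  have rp: "r > 0" unfolding r_def using Bp e Kp by simp
  have r1: "r \<le> 1" "r \<le> 1/(36*pi*B\<^sup>2)" "r \<le> \<epsilon>\<^sup>2/(2*K)" unfolding r_def by auto
  have rB: "18*pi*B\<^sup>2*r\<^sup>2 \<le> r/2"
  proof -
    have "r * (36*pi*B\<^sup>2) \<le> 1" using r1(2) Bp by (simp add: field_simps)
    then have "r * (r * (36*pi*B\<^sup>2)) \<le> r * 1" using rp by (intro mult_left_mono) auto
    then show ?thesis by (simp add: power2_eq_square algebra_simps)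
  qed
  obtain g where g: "g \<in> SM" "d2 u g < r\<^sup>2 / (8*pi)"
    using APX_all[OF Lu] rp unfolding APX_def by (metis divide_pos_pos mult_pos_pos pi_gt_zero zero_less_numeral zero_less_power)
  have Lg: "L2N g" by (rule SM_L2N[OF g(1)])
  have gm[measurable]: "g \<in> borel_measurable NN" by (rule SM_NN[OF g(1)])
  define \<psi> where "\<psi> x = of_int h * x + g x" for x
  have L\<psi>: "L2N \<psi>" unfolding \<psi>_def by (rule L2N_add[OF Lh Lg])
  have \<psi>m[measurable]: "\<psi> \<in> borel_measurable NN" using L\<psi> by (simp add: L2N_def)
  have thpsi: "\<theta> x - \<psi> x = u x - g x" for x unfolding u_def \<psi>_def by simp
  have iabs: "integrable NN (\<lambda>x. \<bar>\<theta> x - \<psi> x\<bar>)"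
    using L2N_int[OF L2N_diff[OF Lth L\<psi>]] by (rule integrable_abs)
  have Dbound: "integral\<^sup>L NN (\<lambda>x. \<bar>\<theta> x - \<psi> x\<bar>) \<le> r / 2"
  proof -
    define a where "a = r / (4*pi)"
    have ap: "a > 0" using rp by (simp add: a_def)
    have "integral\<^sup>L NN (\<lambda>x. \<bar>\<theta> x - \<psi> x\<bar>) \<le> integral\<^sup>L NN (\<lambda>x. a / 2 + (u x - g x)\<^sup>2 / (2 * a))"
    proof (rule integral_mono[OF iabs])
      show "integrable NN (\<lambda>x. a / 2 + (u x - g x)\<^sup>2 / (2 * a))"
        using L2N_int_diff[OF Lu Lg] by simp
      fix x show "\<bar>\<theta> x - \<psi> x\<bar> \<le> a / 2 + (u x - g x)\<^sup>2 / (2 * a)"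
        unfolding thpsi by (rule abs_le_sq[OF ap])
    qed
    also have "\<dots> = a / 2 * (2 * pi) + d2 u g / (2 * a)"
      unfolding d2_def using L2N_int_diff[OF Lu Lg] measure_NN_space by simp
    also have "\<dots> \<le> r / 4 + r / 4"
    proof (rule add_mono)
      show "a / 2 * (2 * pi) \<le> r / 4" by (simp add: a_def)
      have "d2 u g / (2 * a) \<le> (r\<^sup>2 / (8*pi)) / (2 * a)" using g(2) ap by (intro divide_right_mono) auto
      also have "\<dots> = r / 4" using rp by (simp add: a_def power2_eq_square field_simps)
      finally show "d2 u g / (2 * a) \<le> r / 4" .
    qed
    finally show ?thesis by simp
  qed
  have ipsi: "integrable NN \<psi>" by (rule L2N_int[OF L\<psi>])
  define T where "T = {-r..r} \<times> {-r..r} \<times> {-r..r}"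
  have inT: "\<bar>fst t\<bar> \<le> r" "\<bar>fst (snd t)\<bar> \<le> r" "\<bar>snd (snd t)\<bar> \<le> r" if "t \<in> T" for t
    using that unfolding T_def by (auto simp: mem_Times_iff abs_le_iff)
  have \<tau>T: "\<bar>\<tau> t x\<bar> \<le> 3 * B * r" if "t \<in> T" "x \<in> {0..2*pi}" for t x
  proof -
    have "\<bar>\<tau> t x\<bar> \<le> B * (\<bar>fst t\<bar> + \<bar>fst (snd t)\<bar> + \<bar>snd (snd t)\<bar>)" using \<tau>B[OF that(2)] .
    also have "\<dots> \<le> B * (r + r + r)" using inT[OF that(1)] Bp by (intro mult_left_mono) auto
    finally show ?thesis by simp
  qed
  have \<tau>sq: "integral\<^sup>L NN (\<lambda>x. (\<tau> t x)\<^sup>2) \<le> r / 2" if t: "t \<in> T" for t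
  proof -
    have "integral\<^sup>L NN (\<lambda>x. (\<tau> t x)\<^sup>2) \<le> integral\<^sup>L NN (\<lambda>x. (3 * B * r)\<^sup>2)"
    proof (rule integral_mono_AE)
      show "integrable NN (\<lambda>x. (\<tau> t x)\<^sup>2)" using L2N_int_sq[OF SM_L2N[OF \<tau>SM]] .
      show "integrable NN (\<lambda>x. (3 * B * r)\<^sup>2)" by simp
      show "AE x in NN. (\<tau> t x)\<^sup>2 \<le> (3 * B * r)\<^sup>2"
        using \<tau>T[OF t] by (intro AE_I2) (simp, metis abs_ge_zero power2_abs power_mono)
    qed
    also have "\<dots> = 18*pi*B\<^sup>2*r\<^sup>2" using measure_NN_space by (simp add: power_mult_distrib)
    also have "\<dots> \<le> r / 2" by (rule rB)
    finally show ?thesis .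
  qed

  define F1 where "F1 t = integral\<^sup>L NN (\<lambda>x. \<psi> x + \<tau> t x)" for t
  define F2 where "F2 t = integral\<^sup>L NN (\<lambda>x. cos (\<psi> x + \<tau> t x))" for t
  define F3 where "F3 t = integral\<^sup>L NN (\<lambda>x. sin (\<psi> x + \<tau> t x))" for t
  have mF2: "(\<lambda>x. cos (\<psi> x + \<tau> t x)) \<in> borel_measurable NN" for t
    using \<psi>m \<tau>m[of t] by (intro cont_comp_meas[where c=cos] borel_measurable_add continuous_intros)
  have mF3: "(\<lambda>x. sin (\<psi> x + \<tau> t x)) \<in> borel_measurable NN" for t
    using \<psi>m \<tau>m[of t] by (intro cont_comp_meas[where c=sin] borel_measurable_add continuous_intros)
  have iF2: "integrable NN (\<lambda>x. cos (\<psi> x + \<tau> t x))" for t by (rule bdd_int[where B=1, OF mF2]) simp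
  have iF3: "integrable NN (\<lambda>x. sin (\<psi> x + \<tau> t x))" for t by (rule bdd_int[where B=1, OF mF3]) simp
  have iTau: "integrable NN (\<tau> t)" for t using L2N_int[OF SM_L2N[OF \<tau>SM]] .
  have F1eq: "F1 t = integral\<^sup>L NN \<psi> + fst t" for t
    unfolding F1_def using ipsi iTau[of t] \<tau>i(1)[of t] by simp
  have F2lip: "\<bar>F2 t - F2 s\<bar> \<le> (6 * pi * B) * dist t s" for t s
  proof -
    have "\<bar>F2 t - F2 s\<bar> = \<bar>integral\<^sup>L NN (\<lambda>x. cos (\<psi> x + \<tau> t x) - cos (\<psi> x + \<tau> s x))\<bar>"
      unfolding F2_def using iF2[of t] iF2[of s] by simp
    also have "\<dots> \<le> integral\<^sup>L NN (\<lambda>x. 3 * B * dist t s)"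
    proof (rule int_abs_le)
      show "integrable NN (\<lambda>x. cos (\<psi> x + \<tau> t x) - cos (\<psi> x + \<tau> s x))" using iF2[of t] iF2[of s] by simp
      show "integrable NN (\<lambda>x. 3 * B * dist t s)" by simp
      fix x assume x: "x \<in> {0..2*pi}"
      have "\<bar>cos (\<psi> x + \<tau> t x) - cos (\<psi> x + \<tau> s x)\<bar> \<le> \<bar>\<tau> t x - \<tau> s x\<bar>" using lip_cos[of "\<psi> x + \<tau> t x" "\<psi> x + \<tau> s x"] by simp
      also have "\<dots> \<le> 3 * B * dist t s" by (rule \<tau>lip[OF x])
      finally show "\<bar>cos (\<psi> x + \<tau> t x) - cos (\<psi> x + \<tau> s x)\<bar> \<le> 3 * B * dist t s" .
    qed
    also have "\<dots> = (6 * pi * B) * dist t s" using measure_NN_space by simp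
    finally show ?thesis .
  qed
  have F3lip: "\<bar>F3 t - F3 s\<bar> \<le> (6 * pi * B) * dist t s" for t s
  proof -
    have "\<bar>F3 t - F3 s\<bar> = \<bar>integral\<^sup>L NN (\<lambda>x. sin (\<psi> x + \<tau> t x) - sin (\<psi> x + \<tau> s x))\<bar>"
      unfolding F3_def using iF3[of t] iF3[of s] by simp
    also have "\<dots> \<le> integral\<^sup>L NN (\<lambda>x. 3 * B * dist t s)"
    proof (rule int_abs_le)
      show "integrable NN (\<lambda>x. sin (\<psi> x + \<tau> t x) - sin (\<psi> x + \<tau> s x))" using iF3[of t] iF3[of s] by simp
      show "integrable NN (\<lambda>x. 3 * B * dist t s)" by simp
      fix x assume x: "x \<in> {0..2*pi}"
      have "\<bar>sin (\<psi> x + \<tau> t x) - sin (\<psi> x + \<tau> s x)\<bar> \<le> \<bar>\<tau> t x - \<tau> s x\<bar>" using lip_sin[of "\<psi> x + \<tau> t x" "\<psi> x + \<tau> s x"] by simp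
      also have "\<dots> \<le> 3 * B * dist t s" by (rule \<tau>lip[OF x])
      finally show "\<bar>sin (\<psi> x + \<tau> t x) - sin (\<psi> x + \<tau> s x)\<bar> \<le> 3 * B * dist t s" .
    qed
    also have "\<dots> = (6 * pi * B) * dist t s" using measure_NN_space by simp
    finally show ?thesis .
  qed
  define Gm where "Gm t = (fst t - (F1 t - 2 * pi\<^sup>2), fst (snd t) - F2 t, snd (snd t) - F3 t)" for t
  have cF2: "continuous_on T F2" using Bp by (intro cont_lip[OF _ F2lip]) simp
  have cF3: "continuous_on T F3" using Bp by (intro cont_lip[OF _ F3lip]) simp
  have cGm: "continuous_on T Gm"
  proof -
    have "continuous_on T (\<lambda>t. (fst t - (integral\<^sup>L NN \<psi> + fst t - 2 * pi\<^sup>2), fst (snd t) - F2 t, snd (snd t) - F3 t))"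
      by (intro continuous_intros cF2 cF3)
    then show ?thesis unfolding Gm_def F1eq .
  qed
  have comp1: "\<bar>fst t - (F1 t - 2 * pi\<^sup>2)\<bar> \<le> r / 2" for t
  proof -
    have "fst t - (F1 t - 2 * pi\<^sup>2) = integral\<^sup>L NN (\<lambda>x. \<theta> x - \<psi> x)"
      unfolding F1eq using ith L2N_int[OF Lth] ipsi by simp
    also have "\<bar>\<dots>\<bar> \<le> integral\<^sup>L NN (\<lambda>x. \<bar>\<theta> x - \<psi> x\<bar>)"
      using L2N_int[OF Lth] ipsi iabs by (intro int_abs_le) auto
    finally show ?thesis using Dbound by linarith
  qed
  have Epos: "integrable NN (\<lambda>x. \<bar>\<theta> x - \<psi> x\<bar> + (\<tau> t x)\<^sup>2)" for t
    using iabs L2N_int_sq[OF SM_L2N[OF \<tau>SM]] by simp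
  have icth: "integrable NN (\<lambda>x. cos (\<theta> x))" "integrable NN (\<lambda>x. sin (\<theta> x))"
    using cos_sin_int[OF thmeas, of 0] by simp_all
  have isth: "integrable NN (\<lambda>x. - sin (\<theta> x) * \<tau> t x)" "integrable NN (\<lambda>x. cos (\<theta> x) * \<tau> t x)" for t
    using SM_prod_int[OF thmeas \<tau>SM] by auto
  have comp2: "\<bar>fst (snd t) - F2 t\<bar> \<le> r" if t: "t \<in> T" for t
  proof -
    have "fst (snd t) - F2 t = integral\<^sup>L NN (\<lambda>x. - sin (\<theta> x) * \<tau> t x + cos (\<theta> x) - cos (\<psi> x + \<tau> t x))"
      unfolding F2_def using \<tau>i(2)[of t] icos isth(1)[of t] icth(1) iF2[of t] by simp
    also have "\<bar>\<dots>\<bar> \<le> integral\<^sup>L NN (\<lambda>x. \<bar>\<theta> x - \<psi> x\<bar> + (\<tau> t x)\<^sup>2)"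
    proof (rule int_abs_le[OF _ Epos])
      show "integrable NN (\<lambda>x. - sin (\<theta> x) * \<tau> t x + cos (\<theta> x) - cos (\<psi> x + \<tau> t x))"
        using isth(1)[of t] icth(1) iF2[of t] by simp
      fix x
      have "\<bar>- sin (\<theta> x) * \<tau> t x + cos (\<theta> x) - cos (\<psi> x + \<tau> t x)\<bar>
          \<le> \<bar>cos (\<psi> x + \<tau> t x) - cos (\<theta> x + \<tau> t x)\<bar> + \<bar>cos (\<theta> x + \<tau> t x) - cos (\<theta> x) + sin (\<theta> x) * \<tau> t x\<bar>"
        by linarith
      also have "\<dots> \<le> \<bar>\<theta> x - \<psi> x\<bar> + (\<tau> t x)\<^sup>2"
        using lip_cos[of "\<psi> x + \<tau> t x" "\<theta> x + \<tau> t x"] cos_taylor[of "\<theta> x" "\<tau> t x"] by simp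
      finally show "\<bar>- sin (\<theta> x) * \<tau> t x + cos (\<theta> x) - cos (\<psi> x + \<tau> t x)\<bar> \<le> \<bar>\<theta> x - \<psi> x\<bar> + (\<tau> t x)\<^sup>2" .
    qed
    also have "\<dots> = integral\<^sup>L NN (\<lambda>x. \<bar>\<theta> x - \<psi> x\<bar>) + integral\<^sup>L NN (\<lambda>x. (\<tau> t x)\<^sup>2)"
      using iabs L2N_int_sq[OF SM_L2N[OF \<tau>SM]] by simp
    also have "\<dots> \<le> r / 2 + r / 2" using Dbound \<tau>sq[OF t] by (rule add_mono)
    finally show ?thesis by simp
  qed
  have comp3: "\<bar>snd (snd t) - F3 t\<bar> \<le> r" if t: "t \<in> T" for t
  proof -
    have "snd (snd t) - F3 t = integral\<^sup>L NN (\<lambda>x. cos (\<theta> x) * \<tau> t x + sin (\<theta> x) - sin (\<psi> x + \<tau> t x))"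
      unfolding F3_def using \<tau>i(3)[of t] isin isth(2)[of t] icth(2) iF3[of t] by simp
    also have "\<bar>\<dots>\<bar> \<le> integral\<^sup>L NN (\<lambda>x. \<bar>\<theta> x - \<psi> x\<bar> + (\<tau> t x)\<^sup>2)"
    proof (rule int_abs_le[OF _ Epos])
      show "integrable NN (\<lambda>x. cos (\<theta> x) * \<tau> t x + sin (\<theta> x) - sin (\<psi> x + \<tau> t x))"
        using isth(2)[of t] icth(2) iF3[of t] by simp
      fix x
      have "\<bar>cos (\<theta> x) * \<tau> t x + sin (\<theta> x) - sin (\<psi> x + \<tau> t x)\<bar>
          \<le> \<bar>sin (\<psi> x + \<tau> t x) - sin (\<theta> x + \<tau> t x)\<bar> + \<bar>sin (\<theta> x + \<tau> t x) - sin (\<theta> x) - cos (\<theta> x) * \<tau> t x\<bar>"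
        by linarith
      also have "\<dots> \<le> \<bar>\<theta> x - \<psi> x\<bar> + (\<tau> t x)\<^sup>2"
        using lip_sin[of "\<psi> x + \<tau> t x" "\<theta> x + \<tau> t x"] sin_taylor[of "\<theta> x" "\<tau> t x"] by simp
      finally show "\<bar>cos (\<theta> x) * \<tau> t x + sin (\<theta> x) - sin (\<psi> x + \<tau> t x)\<bar> \<le> \<bar>\<theta> x - \<psi> x\<bar> + (\<tau> t x)\<^sup>2" .
    qed
    also have "\<dots> = integral\<^sup>L NN (\<lambda>x. \<bar>\<theta> x - \<psi> x\<bar>) + integral\<^sup>L NN (\<lambda>x. (\<tau> t x)\<^sup>2)"
      using iabs L2N_int_sq[OF SM_L2N[OF \<tau>SM]] by simp
    also have "\<dots> \<le> r / 2 + r / 2" using Dbound \<tau>sq[OF t] by (rule add_mono)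
    finally show ?thesis by simp
  qed
  have GmT: "Gm \<in> T \<rightarrow> T"
  proof
    fix t assume t: "t \<in> T"
    have "\<bar>fst t - (F1 t - 2 * pi\<^sup>2)\<bar> \<le> r" using comp1[of t] rp by linarith
    then show "Gm t \<in> T" using comp2[OF t] comp3[OF t] unfolding Gm_def T_def
      by (auto simp: mem_Times_iff abs_le_iff)
  qed
  have "compact T" unfolding T_def by (intro compact_Times compact_Icc)
  moreover have "convex T" unfolding T_def by (intro convex_Times convex_real_interval)
  moreover have "T \<noteq> {}" unfolding T_def using rp by auto
  ultimately obtain t where t: "t \<in> T" "Gm t = t" using brouwer cGm GmT by metis
  then have Ft: "F1 t = 2 * pi\<^sup>2" "F2 t = 0" "F3 t = 0" unfolding Gm_def by (auto simp: prod_eq_iff)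

  define G where "G x = g x + \<tau> t x" for x
  have GSM: "G \<in> SM" unfolding G_def using g(1) \<tau>SM[of t] by (rule SM_add)
  define \<eta> where "\<eta> x = of_int h * x + G x" for x
  have eta_psi: "\<eta> x = \<psi> x + \<tau> t x" for x unfolding \<eta>_def G_def \<psi>_def by simp
  have L\<eta>: "L2N \<eta>" unfolding \<eta>_def by (rule L2N_add[OF Lh SM_L2N[OF GSM]])
  have "\<eta> \<in> M_set"
    unfolding M_set_def using L2N_L2[OF L\<eta>] Ft unfolding F1_def F2_def F3_def LINT_NN eta_psi
    by simp
  moreover have "\<exists>g. smooth_real g \<and> (\<forall>x. g (x + 2*pi) = g x) \<and> (\<forall>s\<in>{0..2*pi}. \<eta> s - of_int h * s = g s)"
    using SM_smooth[OF GSM] SM_periodic[OF GSM] by (intro exI[of _ G]) (simp add: \<eta>_def)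
  ultimately have etaS: "\<eta> \<in> smooth_index_set h" unfolding smooth_index_set_def by blast
  have "(LINT s:{0..2*pi}|lborel. (\<theta> s - \<eta> s)\<^sup>2) = d2 u G"
    unfolding LINT_NN d2_def u_def \<eta>_def by (simp add: algebra_simps)
  also have "\<dots> \<le> 2 * d2 u g + 2 * d2 g G" by (rule d2_tri[OF Lu Lg SM_L2N[OF GSM]])
  also have "d2 g G = integral\<^sup>L NN (\<lambda>x. (\<tau> t x)\<^sup>2)" unfolding d2_def G_def by simp
  also have "2 * d2 u g + 2 * integral\<^sup>L NN (\<lambda>x. (\<tau> t x)\<^sup>2) \<le> 2 * (r\<^sup>2 / (8*pi)) + 2 * (18*pi*B\<^sup>2*r\<^sup>2)"
  proof -
    have "integral\<^sup>L NN (\<lambda>x. (\<tau> t x)\<^sup>2) \<le> 18*pi*B\<^sup>2*r\<^sup>2"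
    proof -
      have "integral\<^sup>L NN (\<lambda>x. (\<tau> t x)\<^sup>2) \<le> integral\<^sup>L NN (\<lambda>x. (3 * B * r)\<^sup>2)"
      proof (rule integral_mono_AE)
        show "integrable NN (\<lambda>x. (\<tau> t x)\<^sup>2)" using L2N_int_sq[OF SM_L2N[OF \<tau>SM]] .
        show "integrable NN (\<lambda>x. (3 * B * r)\<^sup>2)" by simp
        show "AE x in NN. (\<tau> t x)\<^sup>2 \<le> (3 * B * r)\<^sup>2"
          using \<tau>T[OF t(1)] by (intro AE_I2) (simp, metis abs_ge_zero power2_abs power_mono)
      qed
      also have "\<dots> = 18*pi*B\<^sup>2*r\<^sup>2" using measure_NN_space by (simp add: power_mult_distrib)
      finally show ?thesis .
    qed
    then show ?thesis using g(2) by linarith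
  qed
  also have "\<dots> = r\<^sup>2 * (1/(4*pi) + 36*pi*B\<^sup>2)" by (simp add: field_simps power2_eq_square)
  also have "\<dots> \<le> r\<^sup>2 * K" unfolding K_def by (intro mult_left_mono) auto
  also have "\<dots> \<le> r * K"
  proof -
    have "r\<^sup>2 \<le> r" using rp r1(1) by (simp add: power2_eq_square mult_le_cancel_left1)
    then show ?thesis using Kp by (intro mult_right_mono) auto
  qed
  also have "\<dots> \<le> \<epsilon>\<^sup>2 / 2" using r1(3) Kp by (simp add: field_simps)
  also have "\<dots> < \<epsilon>\<^sup>2" using e by simp
  finally have lt: "(LINT s:{0..2*pi}|lborel. (\<theta> s - \<eta> s)\<^sup>2) < \<epsilon>\<^sup>2" .
  have "L2_dist \<theta> \<eta> < sqrt (\<epsilon>\<^sup>2)" unfolding L2_dist_def using lt by (rule real_sqrt_less_mono)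
  then have "L2_dist \<theta> \<eta> < \<epsilon>" using e by simp
  then show ?thesis using etaS by blast
qed

theorem mainTheorem16:
  fixes h :: int
  shows "\<forall>\<theta> \<in> M_set - Z_set. \<forall>\<epsilon>>0. \<exists>\<eta> \<in> smooth_index_set h. L2_dist \<theta> \<eta> < \<epsilon>"
  using main_construct by blast


end
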